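(* Let $\Gamma\subset\mathbb R^{N-1}$ be a bounded Lipschitz domain and $\Omega_2:=\Gamma\times(0,1)$. The trace map $u\mapsto u|_\Gamma$ (restriction to $z=0$) from $H(\partial_z,\Omega_2)$ to $L^2(\Gamma)$ is well defined, and for all $u\in H(\partial_z,\Omega_2)$: $$\|u\|_{L^2(\Gamma)}\le\sqrt2\big(\|u\|_{L^2(\Omega_2)}+\|\partial_zu\|_{L^2(\Omega_2)}\big),\qquad \|u\|_{L^2(\Omega_2)}\le\sqrt2\big(\|\partial_zu\|_{L^2(\Omega_2)}+\|u\|_{L^2(\Gamma)}\big).$$
   Context: Points of $\Omega_2$ are written $(\tilde x,z)$ with $\tilde x\in\Gamma$, $z\in(0,1)$, and $\Gamma$ is identified with $\Gamma\times\{0\}$. $H(\partial_z,\Omega_2):=\{u\in L^2(\Omega_2):\partial_zu\in L^2(\Omega_2)\}$ (with $\partial_z u$ the distributional derivative in $z$), a Hilbert space with inner product $\langle u,v\rangle:=\int_{\Omega_2}(uv+\partial_zu\,\partial_zv)\,d\tilde x\,dz$. *)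

theory Defs
  imports "HOL-Analysis.Analysis"
begin

definition lipschitz_domain :: "'a::euclidean_space set \<Rightarrow> bool" where
  "lipschitz_domain D \<longleftrightarrow> open D \<and> connected D \<and> D \<noteq> {} \<and>
     (\<forall>x\<in>frontier D. \<exists>e r L f. norm e = 1 \<and> r > 0 \<and>
        L-lipschitz_on {w. w \<bullet> e = 0} f \<and>
        D \<inter> ball x r = {y \<in> ball x r. y \<bullet> e < f (y - (y \<bullet> e) *\<^sub>R e)})"

definition Omega2 :: "'a::euclidean_space set \<Rightarrow> ('a \<times> real) set" where
  "Omega2 G = G \<times> {0<..<1}"

definition in_L2 :: "'b::euclidean_space set \<Rightarrow> ('b \<Rightarrow> real) \<Rightarrow> bool" where
  "in_L2 A f \<longleftrightarrow> (\<lambda>x. indicator A x * f x) \<in> borel_measurable lebesgue \<and>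
                  set_integrable lebesgue A (\<lambda>x. (f x)\<^sup>2)"

definition L2_norm :: "'b::euclidean_space set \<Rightarrow> ('b \<Rightarrow> real) \<Rightarrow> real" where
  "L2_norm A f = sqrt (LINT x:A|lebesgue. (f x)\<^sup>2)"

coinductive smooth_fun :: "('b::euclidean_space \<Rightarrow> real) \<Rightarrow> bool" where
  "(\<forall>x. f differentiable (at x)) \<Longrightarrow>
   (\<forall>v. smooth_fun (\<lambda>x. frechet_derivative f (at x) v)) \<Longrightarrow> smooth_fun f"

definition test_fun :: "'b::euclidean_space set \<Rightarrow> ('b \<Rightarrow> real) \<Rightarrow> bool" where
  "test_fun U \<phi> \<longleftrightarrow> smooth_fun \<phi> \<and> compact (closure {x. \<phi> x \<noteq> 0}) \<and>
                    closure {x. \<phi> x \<noteq> 0} \<subseteq> U"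

definition weak_dz :: "('a::euclidean_space \<times> real) set \<Rightarrow> ('a \<times> real \<Rightarrow> real)
                        \<Rightarrow> ('a \<times> real \<Rightarrow> real) \<Rightarrow> bool" where
  "weak_dz U u g \<longleftrightarrow> (\<forall>\<phi>. test_fun U \<phi> \<longrightarrow>
      (LINT p:U|lebesgue. u p * frechet_derivative \<phi> (at p) (0, 1))
      = - (LINT p:U|lebesgue. g p * \<phi> p))"

definition H_dz :: "'a::euclidean_space set \<Rightarrow> ('a \<times> real \<Rightarrow> real) \<Rightarrow> ('a \<times> real \<Rightarrow> real) \<Rightarrow> bool" where
  "H_dz G u g \<longleftrightarrow> in_L2 (Omega2 G) u \<and> in_L2 (Omega2 G) g \<and> weak_dz (Omega2 G) u g"

definition is_trace :: "'a::euclidean_space set \<Rightarrow> ('a \<times> real \<Rightarrow> real) \<Rightarrow> ('a \<Rightarrow> real) \<Rightarrow> bool" where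
  "is_trace G u t \<longleftrightarrow> (\<exists>v. (AE p in lebesgue. p \<in> Omega2 G \<longrightarrow> v p = u p) \<and>
      (AE x in lebesgue. x \<in> G \<longrightarrow>
          continuous_on {0..<1} (\<lambda>z. v (x, z)) \<and> t x = v (x, 0)))"

end

theory Submission
  imports Defs "HOL-Real_Asymp.Real_Asymp"
begin

definition F :: "nat \<Rightarrow> real \<Rightarrow> real" where
  "F k x = (if x > 0 then exp (- 1 / x) / x ^ k else 0)"

lemma F_lim0: "((\<lambda>h. exp (- 1 / h) / h ^ k / h) \<longlongrightarrow> 0) (at_right (0::real))"
  by real_asymp

lemma F_deriv: "(F k has_real_derivative (F (k+2) x - real k * F (k+1) x)) (at x)"
proof (cases "x > 0")
  case True
  have d: "((\<lambda>x. exp (- 1 / x) / x ^ k) has_real_derivative (F (k+2) x - real k * F (k+1) x)) (at x)"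
    using True
    apply (auto intro!: derivative_eq_intros simp: F_def)
    apply (cases k)
     apply (auto simp: field_simps power_Suc)
    done
  show ?thesis
    apply (rule has_field_derivative_transform_within_open[OF d, of "{0<..}"])
    using True by (auto simp: F_def)
next
  case False
  show ?thesis
  proof (cases "x < 0")
    case True
    have d: "((\<lambda>x. 0) has_real_derivative (F (k+2) x - real k * F (k+1) x)) (at x)"
      using True by (auto intro!: derivative_eq_intros simp: F_def)
    show ?thesis
      apply (rule has_field_derivative_transform_within_open[OF d, of "{..<0}"])
      using True by (auto simp: F_def)
  next
    case False
    with \<open>\<not> x > 0\<close> have x0: "x = 0" by auto
    have "((\<lambda>h. (F k h - F k 0) / h) \<longlongrightarrow> 0) (at_left 0)"
    proof (rule Lim_transform_eventually[where f="\<lambda>_. 0"])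
      show "\<forall>\<^sub>F h in at_left 0. 0 = (F k h - F k 0) / h"
        by (auto simp: eventually_at_left_field F_def intro!: exI[of _ "-1"])
    qed simp
    moreover have "((\<lambda>h. (F k h - F k 0) / h) \<longlongrightarrow> 0) (at_right 0)"
    proof (rule Lim_transform_eventually[OF F_lim0[of k]])
      show "\<forall>\<^sub>F h in at_right 0. exp (- 1 / h) / h ^ k / h = (F k h - F k 0) / h"
        by (auto simp: eventually_at_right_field F_def intro!: exI[of _ "1"])
    qed
    ultimately have "((\<lambda>h. (F k h - F k 0) / h) \<longlongrightarrow> 0) (at 0)"
      by (simp add: filterlim_split_at_real)
    then show ?thesis unfolding x0 has_field_derivative_iff
      by (simp add: F_def)
  qed
qed

inductive gen1 :: "(real \<Rightarrow> real) \<Rightarrow> bool" where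
  g1F: "gen1 (\<lambda>x. F k (a * x + b))"
| g1C: "gen1 (\<lambda>x. c)"
| g1A: "gen1 f \<Longrightarrow> gen1 g \<Longrightarrow> gen1 (\<lambda>x. f x + g x)"
| g1M: "gen1 f \<Longrightarrow> gen1 g \<Longrightarrow> gen1 (\<lambda>x. f x * g x)"

lemma gen1_deriv: "gen1 f \<Longrightarrow> \<exists>f'. gen1 f' \<and> (\<forall>x. (f has_real_derivative f' x) (at x))"
proof (induction rule: gen1.induct)
  case (g1F k a b)
  let ?f' = "\<lambda>x. (F (k+2) (a * x + b) + (- real k) * F (k+1) (a * x + b)) * a"
  have "gen1 ?f'" by (intro gen1.intros)
  moreover have "((\<lambda>x. F k (a * x + b)) has_real_derivative ?f' x) (at x)" for x
  proof -
    have "((\<lambda>x. F k (a * x + b)) has_real_derivative (F (k+2) (a * x + b) - real k * F (k+1) (a * x + b)) * a) (at x)"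
      by (rule DERIV_chain2[where f="F k"], rule F_deriv, auto intro!: derivative_eq_intros)
    then show ?thesis by simp
  qed
  ultimately show ?case by blast
next
  case (g1C c)
  show ?case by (rule exI[of _ "\<lambda>x. 0"]) (auto intro: gen1.intros)
next
  case (g1A f g)
  then obtain f' g' where "gen1 f'" "gen1 g'" "\<And>x. (f has_real_derivative f' x) (at x)"
     "\<And>x. (g has_real_derivative g' x) (at x)" by blast
  then show ?case
    by (intro exI[of _ "\<lambda>x. f' x + g' x"]) (auto intro: gen1.intros derivative_intros)
next
  case (g1M f g)
  then obtain f' g' where "gen1 f'" "gen1 g'" "\<And>x. (f has_real_derivative f' x) (at x)"
     "\<And>x. (g has_real_derivative g' x) (at x)" by blast
  with g1M(1,2) show ?case
    by (intro exI[of _ "\<lambda>x. f' x * g x + f x * g' x"])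
      (auto intro!: gen1.intros derivative_eq_intros)
qed

definition smooth1 :: "(real \<Rightarrow> real) \<Rightarrow> bool" where
  "smooth1 f \<longleftrightarrow> (\<exists>D. D 0 = f \<and> (\<forall>n x. (D n has_real_derivative D (Suc n) x) (at x)))"

lemma gen1_smooth1:
  assumes "gen1 f" shows "smooth1 f"
proof -
  define step where "step = (\<lambda>f. SOME f'. gen1 f' \<and> (\<forall>x. (f has_real_derivative f' x) (at x)))"
  have st: "gen1 (step f) \<and> (\<forall>x. (f has_real_derivative step f x) (at x))" if "gen1 f" for f
    using someI_ex[OF gen1_deriv[OF that]] unfolding step_def .
  define D where "D n = (step ^^ n) f" for n
  have g: "gen1 (D n)" for n
    by (induction n) (auto simp: D_def assms st)
  show ?thesis unfolding smooth1_def
    by (rule exI[of _ D]) (auto simp: D_def st[OF g[unfolded D_def]])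
qed

lemma smooth1_deriv:
  assumes "smooth1 f" shows "\<exists>f'. smooth1 f' \<and> (\<forall>x. (f has_real_derivative f' x) (at x))"
proof -
  obtain D where D: "D 0 = f" "\<And>n x. (D n has_real_derivative D (Suc n) x) (at x)"
    using assms unfolding smooth1_def by blast
  have "smooth1 (D 1)" unfolding smooth1_def
    by (rule exI[of _ "\<lambda>n. D (Suc n)"]) (auto simp: D)
  then show ?thesis using D by (intro exI[of _ "D 1"]) auto
qed

inductive genm :: "('b::euclidean_space \<Rightarrow> real) \<Rightarrow> bool" where
  gmB: "smooth1 \<psi> \<Longrightarrow> genm (\<lambda>p. \<psi> (p \<bullet> c))"
| gmC: "genm (\<lambda>x. c)"
| gmA: "genm f \<Longrightarrow> genm g \<Longrightarrow> genm (\<lambda>x. f x + g x)"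
| gmM: "genm f \<Longrightarrow> genm g \<Longrightarrow> genm (\<lambda>x. f x * g x)"

lemma genm_deriv: "genm f \<Longrightarrow> \<exists>D. (\<forall>x. (f has_derivative D x) (at x)) \<and> (\<forall>v. genm (\<lambda>x. D x v))"
proof (induction rule: genm.induct)
  case (gmB \<psi> c)
  then obtain \<psi>' where s: "smooth1 \<psi>'" and d: "\<And>x. (\<psi> has_real_derivative \<psi>' x) (at x)"
    using smooth1_deriv by blast
  have "((\<lambda>p. \<psi> (p \<bullet> c)) has_derivative (\<lambda>h. \<psi>' (x \<bullet> c) * (h \<bullet> c))) (at x)" for x
  proof -
    have l: "((\<lambda>p. p \<bullet> c) has_derivative (\<lambda>h. h \<bullet> c)) (at x)"
      by (auto intro!: derivative_eq_intros)
    show ?thesis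
      using has_derivative_compose[OF l d[of "x \<bullet> c", unfolded has_field_derivative_def]] by simp
  qed
  moreover have "genm (\<lambda>x. \<psi>' (x \<bullet> c) * (v \<bullet> c))" for v
    by (intro genm.intros s)
  ultimately show ?case by (intro exI[of _ "\<lambda>x h. \<psi>' (x \<bullet> c) * (h \<bullet> c)"]) auto
next
  case (gmC c)
  show ?case by (rule exI[of _ "\<lambda>x h. 0"]) (auto intro: genm.intros)
next
  case (gmA f g)
  then obtain Df Dg where "\<And>x. (f has_derivative Df x) (at x)" "\<And>v. genm (\<lambda>x. Df x v)"
    "\<And>x. (g has_derivative Dg x) (at x)" "\<And>v. genm (\<lambda>x. Dg x v)" by blast
  then show ?case
    by (intro exI[of _ "\<lambda>x h. Df x h + Dg x h"]) (auto intro: genm.intros derivative_intros)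
next
  case (gmM f g)
  then obtain Df Dg where "\<And>x. (f has_derivative Df x) (at x)" "\<And>v. genm (\<lambda>x. Df x v)"
    "\<And>x. (g has_derivative Dg x) (at x)" "\<And>v. genm (\<lambda>x. Dg x v)" by blast
  with gmM(1,2) show ?case
    by (intro exI[of _ "\<lambda>x h. f x * Dg x h + Df x h * g x"]) (auto intro!: genm.intros derivative_intros)
qed

lemma genm_smooth: "genm f \<Longrightarrow> smooth_fun f"
proof (coinduction arbitrary: f rule: smooth_fun.coinduct)
  case (smooth_fun f)
  then obtain D where D: "\<And>x. (f has_derivative D x) (at x)" "\<And>v. genm (\<lambda>x. D x v)"
    using genm_deriv by blast
  have fd: "frechet_derivative f (at x) = D x" for x
    using D(1) frechet_derivative_at by metis
  show ?case using D by (auto simp: fd differentiable_def)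
qed


lemma fund_global:
  fixes f :: "'b::euclidean_space \<Rightarrow> real"
  assumes f: "integrable lborel f"
    and z: "\<And>a b. (\<integral>x. indicator (box a b) x * f x \<partial>lborel) = 0"
  shows "AE x in lborel. f x = 0"
proof -
  have fm[measurable]: "f \<in> borel_measurable lborel" using f by auto
  define M where "M = density lborel (\<lambda>x. ennreal (f x))"
  define N where "N = density lborel (\<lambda>x. ennreal (- f x))"
  have eqbox: "emeasure M (box a b) = ennreal (\<integral>x. indicator (box a b) x * max (f x) 0 \<partial>lborel)
     \<and> emeasure N (box a b) = ennreal (\<integral>x. indicator (box a b) x * max (- f x) 0 \<partial>lborel)
     \<and> emeasure M (box a b) = emeasure N (box a b)" for a b
  proof -
    have i1: "integrable lborel (\<lambda>x. indicator (box a b) x * max (f x) 0)"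
      by (rule Bochner_Integration.integrable_bound[OF f]) (auto simp: indicator_def)
    have i2: "integrable lborel (\<lambda>x. indicator (box a b) x * max (- f x) 0)"
      by (rule Bochner_Integration.integrable_bound[OF f]) (auto simp: indicator_def)
    have "(\<integral>x. indicator (box a b) x * max (f x) 0 \<partial>lborel) - (\<integral>x. indicator (box a b) x * max (- f x) 0 \<partial>lborel)
        = (\<integral>x. indicator (box a b) x * max (f x) 0 - indicator (box a b) x * max (- f x) 0 \<partial>lborel)"
      using i1 i2 by simp
    also have "\<dots> = (\<integral>x. indicator (box a b) x * f x \<partial>lborel)"
      by (rule Bochner_Integration.integral_cong) (auto simp: indicator_def max_def)
    finally have eq: "(\<integral>x. indicator (box a b) x * max (f x) 0 \<partial>lborel) = (\<integral>x. indicator (box a b) x * max (- f x) 0 \<partial>lborel)"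
      using z by simp
    have m1: "emeasure M (box a b) = ennreal (\<integral>x. indicator (box a b) x * max (f x) 0 \<partial>lborel)"
      unfolding M_def
      apply (simp add: emeasure_density)
      apply (subst nn_integral_eq_integral[symmetric, OF i1])
       apply (auto intro!: nn_integral_cong simp: indicator_def)
      apply (metis ennreal_max_0 max.commute)
      done
    have m2: "emeasure N (box a b) = ennreal (\<integral>x. indicator (box a b) x * max (- f x) 0 \<partial>lborel)"
      unfolding N_def
      apply (simp add: emeasure_density)
      apply (subst nn_integral_eq_integral[symmetric, OF i2])
       apply (auto intro!: nn_integral_cong simp: indicator_def)
      apply (metis ennreal_max_0 max.commute)
      done
    show ?thesis using m1 m2 eq by simp
  qed
  have sb: "sets (borel::'b measure) = sigma_sets UNIV (range (\<lambda>(a,b). box a b))"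
    by (subst borel_eq_box) simp
  have MN: "M = N"
  proof (rule measure_eqI_generator_eq[where E="range (\<lambda>(a,b). box a b)" and \<Omega>=UNIV
        and A="\<lambda>i. box (- real i *\<^sub>R One) (real i *\<^sub>R One)"])
    show "Int_stable (range (\<lambda>(a, b). box a b :: 'b set))"
      by (auto simp: Int_stable_def box_Int_box)
    show "sets M = sigma_sets UNIV (range (\<lambda>(a, b). box a b))"
      using sb by (simp add: M_def)
    show "sets N = sigma_sets UNIV (range (\<lambda>(a, b). box a b))"
      using sb by (simp add: N_def)
    show "(\<Union>i. box (- real i *\<^sub>R One) (real i *\<^sub>R One)) = (UNIV :: 'b set)"
    proof -
      have "x \<in> (\<Union>i. box (- real i *\<^sub>R One) (real i *\<^sub>R One))" for x :: 'b
      proof -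
        obtain n :: nat where n: "norm x < n" using reals_Archimedean2 by blast
        have "x \<in> box (- real n *\<^sub>R One) (real n *\<^sub>R One)"
          unfolding mem_box using Basis_le_norm[of _ x] n
          by (auto simp: inner_Basis abs_le_iff) (smt (verit) Basis_le_norm abs_le_iff)+
        then show ?thesis by blast
      qed
      then show ?thesis by blast
    qed
    show "emeasure M (box (- real i *\<^sub>R One) (real i *\<^sub>R One)) \<noteq> \<infinity>" for i
      using eqbox by simp
  qed (use eqbox in auto)
  have "AE x in lborel. ennreal (f x) = ennreal (- f x)"
    by (rule sigma_finite_measure.density_unique[OF sigma_finite_lborel]) (use MN in \<open>auto simp: M_def N_def\<close>)
  then show ?thesis
  proof eventually_elim
    case (elim x)
    then show ?case
      by (cases "f x" "0::real" rule: linorder_cases) (auto simp: ennreal_neg)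
  qed
qed

lemma fund_openbox:
  fixes f :: "'b::euclidean_space \<Rightarrow> real"
  assumes f: "integrable lborel f" and sub: "box a b \<subseteq> S"
    and z: "\<And>a b. cbox a b \<subseteq> S \<Longrightarrow> (\<integral>x. indicator (box a b) x * f x \<partial>lborel) = 0"
  shows "(\<integral>x. indicator (box a b) x * f x \<partial>lborel) = 0"
proof (cases "box a b = {}")
  case True then show ?thesis by simp
next
  case False
  then have ab: "\<And>i. i \<in> Basis \<Longrightarrow> a \<bullet> i < b \<bullet> i" by (simp add: box_ne_empty)
  have fm[measurable]: "f \<in> borel_measurable lborel" using f by auto
  define an where "an n = a + (1 / (real n + 2)) *\<^sub>R (b - a)" for n
  define bn where "bn n = b - (1 / (real n + 2)) *\<^sub>R (b - a)" for n
  have sub2: "cbox (an n) (bn n) \<subseteq> box a b" for n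
  proof
    fix x assume "x \<in> cbox (an n) (bn n)"
    then have "\<forall>i\<in>Basis. an n \<bullet> i \<le> x \<bullet> i \<and> x \<bullet> i \<le> bn n \<bullet> i" by (simp add: mem_box)
    moreover have "\<forall>i\<in>Basis. a \<bullet> i < an n \<bullet> i \<and> bn n \<bullet> i < b \<bullet> i"
    proof
      fix i :: 'b assume i: "i \<in> Basis"
      have e: "0 < (1 / (real n + 2)) * ((b - a) \<bullet> i)" using ab[OF i] by (simp add: inner_diff_left)
      have "an n \<bullet> i = a \<bullet> i + (1 / (real n + 2)) * ((b - a) \<bullet> i)"
           "bn n \<bullet> i = b \<bullet> i - (1 / (real n + 2)) * ((b - a) \<bullet> i)"
        unfolding an_def bn_def by (simp_all only: inner_add_left inner_diff_left inner_scaleR_left)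
      then show "a \<bullet> i < an n \<bullet> i \<and> bn n \<bullet> i < b \<bullet> i" using e by linarith
    qed
    ultimately show "x \<in> box a b" by (force simp: mem_box)
  qed
  have lim: "(\<lambda>n. \<integral>x. indicator (box (an n) (bn n)) x * f x \<partial>lborel) \<longlonglongrightarrow> (\<integral>x. indicator (box a b) x * f x \<partial>lborel)"
  proof (rule integral_dominated_convergence[where w="\<lambda>x. norm (f x)"])
    show "AE x in lborel. (\<lambda>n. indicator (box (an n) (bn n)) x * f x) \<longlonglongrightarrow> indicator (box a b) x * f x"
    proof (intro AE_I2)
      fix x
      show "(\<lambda>n. indicator (box (an n) (bn n)) x * f x) \<longlonglongrightarrow> indicator (box a b) x * f x"
      proof (cases "x \<in> box a b")
        case True
        have "\<forall>\<^sub>F n in sequentially. \<forall>i\<in>Basis. an n \<bullet> i < x \<bullet> i \<and> x \<bullet> i < bn n \<bullet> i"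
        proof (rule eventually_ball_finite[OF finite_Basis], rule ballI)
          fix i :: 'b assume i: "i \<in> Basis"
          have l0: "(\<lambda>n. 1 / (real n + 2)) \<longlonglongrightarrow> 0" by real_asymp
          have la: "(\<lambda>n. an n \<bullet> i) \<longlonglongrightarrow> a \<bullet> i"
            unfolding an_def inner_simps using tendsto_add[OF tendsto_const tendsto_mult[OF l0 tendsto_const], of "a \<bullet> i" "(b - a) \<bullet> i"]
            by (simp add: inner_diff_left)
          have lb: "(\<lambda>n. bn n \<bullet> i) \<longlonglongrightarrow> b \<bullet> i"
            unfolding bn_def inner_simps using tendsto_diff[OF tendsto_const tendsto_mult[OF l0 tendsto_const], of "b \<bullet> i" "(b - a) \<bullet> i"]
            by (simp add: inner_diff_left)
          have "a \<bullet> i < x \<bullet> i" "x \<bullet> i < b \<bullet> i" using True i by (auto simp: mem_box)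
          then show "\<forall>\<^sub>F n in sequentially. an n \<bullet> i < x \<bullet> i \<and> x \<bullet> i < bn n \<bullet> i"
            using order_tendstoD(2)[OF la] order_tendstoD(1)[OF lb] by (auto intro: eventually_conj)
        qed
        then have "\<forall>\<^sub>F n in sequentially. indicator (box (an n) (bn n)) x * f x = indicator (box a b) x * f x"
          by eventually_elim (use True in \<open>auto simp: mem_box\<close>)
        then show ?thesis by (rule tendsto_eventually)
      next
        case False
        then have "x \<notin> box (an n) (bn n)" for n using sub2[of n] box_subset_cbox by blast
        then show ?thesis using False by simp
      qed
    qed
    show "AE x in lborel. norm (indicator (box (an n) (bn n)) x * f x) \<le> norm (f x)" for n
      by (auto simp: indicator_def)
  qed (use f in auto)
  have "(\<lambda>n. \<integral>x. indicator (box (an n) (bn n)) x * f x \<partial>lborel) = (\<lambda>n. 0)"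
    using z sub2 sub by (meson order_trans)
  with lim show ?thesis using LIMSEQ_unique tendsto_const by metis
qed

lemma fund_local:
  fixes f :: "'b::euclidean_space \<Rightarrow> real"
  assumes f: "integrable lborel f" and S: "open S"
    and z: "\<And>a b. cbox a b \<subseteq> S \<Longrightarrow> (\<integral>x. indicator (box a b) x * f x \<partial>lborel) = 0"
  shows "AE x in lborel. x \<in> S \<longrightarrow> f x = 0"
proof -
  have fm[measurable]: "f \<in> borel_measurable lborel" using f by auto
  obtain D where D: "countable D" "D \<subseteq> Pow S" "\<And>X. X \<in> D \<Longrightarrow> \<exists>a b. X = box a b" "\<Union>D = S"
    using open_countable_Union_open_box[OF S] by metis
  have "AE x in lborel. x \<in> X \<longrightarrow> f x = 0" if X: "X \<in> D" for X
  proof -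
    obtain a0 b0 where X0: "X = box a0 b0" using D(3)[OF X] by blast
    have XS: "X \<subseteq> S" using D(2) X by auto
    have "AE x in lborel. indicator X x * f x = 0"
    proof (rule fund_global)
      show "integrable lborel (\<lambda>x. indicator X x * f x)"
        by (rule Bochner_Integration.integrable_bound[OF f]) (auto simp: indicator_def X0)
      fix a b :: 'b
      have "(\<integral>x. indicator (box a b) x * (indicator X x * f x) \<partial>lborel)
          = (\<integral>x. indicator (box a b \<inter> X) x * f x \<partial>lborel)"
        by (rule Bochner_Integration.integral_cong) (auto simp: indicator_def)
      also have "\<dots> = 0"
      proof -
        obtain a' b' where ab': "box a b \<inter> X = box a' b'" using box_Int_box X0 by blast
        have "box a' b' \<subseteq> S" using XS ab' by blast
        then show ?thesis unfolding ab' by (rule fund_openbox[OF f _ z])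
      qed
      finally show "(\<integral>x. indicator (box a b) x * (indicator X x * f x) \<partial>lborel) = 0" .
    qed
    then show ?thesis by eventually_elim (auto simp: indicator_def)
  qed
  then have "AE x in lborel. \<forall>X\<in>D. x \<in> X \<longrightarrow> f x = 0"
    by (subst AE_ball_countable[OF D(1)]) blast
  then show ?thesis by eventually_elim (use D(4) in auto)
qed


lemma integrable_pair_mult:
  fixes a :: "'x::euclidean_space \<Rightarrow> real" and b :: "'y::euclidean_space \<Rightarrow> real"
  assumes a: "integrable lborel a" and b: "integrable lborel b"
  shows "integrable (lborel \<Otimes>\<^sub>M lborel) (\<lambda>p. a (fst p) * b (snd p))"
proof (rule lborel_pair.Fubini_integrable)
  have [measurable]: "a \<in> borel_measurable lborel" "b \<in> borel_measurable lborel" using a b by auto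
  show "(\<lambda>p. a (fst p) * b (snd p)) \<in> borel_measurable (lborel \<Otimes>\<^sub>M lborel)" by measurable
  have "integrable lborel (\<lambda>x. norm (a x) * (\<integral>y. norm (b y) \<partial>lborel))"
    using a by (intro integrable_mult_left) auto
  then show "integrable lborel (\<lambda>x. \<integral>y. norm (a (fst (x, y)) * b (snd (x, y))) \<partial>lborel)"
    by (simp add: abs_mult)
  show "AE x in lborel. integrable lborel (\<lambda>y. a (fst (x, y)) * b (snd (x, y)))"
    using b by (auto intro!: integrable_mult_right)
qed

lemma ibp:
  fixes g \<theta> \<theta>' :: "real \<Rightarrow> real"
  assumes g: "integrable lborel g"
    and d: "\<And>z. (\<theta> has_real_derivative \<theta>' z) (at z)"
    and cont: "continuous_on UNIV \<theta>'"
    and t0: "\<And>z. z \<le> 0 \<Longrightarrow> \<theta> z = 0" and t1: "\<And>z. z \<ge> 1 \<Longrightarrow> \<theta> z = 0"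
  shows "(\<integral>z. indicator {0<..<1} z * (\<integral>s. indicator {0..<z} s * g s \<partial>lborel) * \<theta>' z \<partial>lborel)
       = - (\<integral>s. g s * \<theta> s \<partial>lborel)"
proof -
  have gm[measurable]: "g \<in> borel_measurable borel" using g by auto
  have tm[measurable]: "\<theta>' \<in> borel_measurable borel"
    using cont by (simp add: borel_measurable_continuous_onI)
  obtain B where B: "\<And>z. z \<in> {0..1} \<Longrightarrow> \<bar>\<theta>' z\<bar> \<le> B"
  proof -
    have "compact (\<theta>' ` {0..1})"
      by (rule compact_continuous_image) (use cont continuous_on_subset in auto)
    then obtain B where "\<forall>y\<in>\<theta>' ` {0..1}. norm y \<le> B"
      using compact_imp_bounded bounded_iff by metis
    then have "\<And>z. z \<in> {0..1} \<Longrightarrow> \<bar>\<theta>' z\<bar> \<le> B" by auto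
    then show ?thesis by (rule that)
  qed
  define H where "H = (\<lambda>p::real\<times>real. if 0 < fst p \<and> fst p < 1 \<and> 0 \<le> snd p \<and> snd p < fst p then g (snd p) * \<theta>' (fst p) else 0)"
  have Hm[measurable]: "H \<in> borel_measurable (lborel \<Otimes>\<^sub>M lborel)"
    unfolding H_def by measurable
  have Hint: "integrable (lborel \<Otimes>\<^sub>M lborel) H"
  proof (rule Bochner_Integration.integrable_bound[OF integrable_pair_mult[of "\<lambda>z. indicator {0..1} z * B" "\<lambda>s. \<bar>g s\<bar>"]])
    show "integrable lborel (\<lambda>z::real. indicator {0..1} z * B)"
      by (intro integrable_mult_left) (auto simp: integrable_indicator_iff emeasure_lborel_Icc)
    show "integrable lborel (\<lambda>s. \<bar>g s\<bar>)" using g by auto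
    show "H \<in> borel_measurable (lborel \<Otimes>\<^sub>M lborel)" by measurable
    show "AE p in lborel \<Otimes>\<^sub>M lborel. norm (H p) \<le> norm (indicator {0..1} (fst p) * B * \<bar>g (snd p)\<bar>)"
    proof (intro AE_I2)
      fix p :: "real \<times> real"
      show "norm (H p) \<le> norm (indicator {0..1} (fst p) * B * \<bar>g (snd p)\<bar>)"
      proof (cases "fst p \<in> {0<..<1}")
        case True
        then have "\<bar>\<theta>' (fst p)\<bar> \<le> B" using B by auto
        then show ?thesis using True
          by (auto simp: H_def indicator_def abs_mult mult.commute[of "\<bar>g _\<bar>"] intro: mult_right_mono)
      qed (auto simp: H_def)
    qed
  qed
  have lhs: "(\<integral>z. indicator {0<..<1} z * (\<integral>s. indicator {0..<z} s * g s \<partial>lborel) * \<theta>' z \<partial>lborel)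
       = (\<integral>z. (\<integral>s. H (z, s) \<partial>lborel) \<partial>lborel)"
  proof (rule Bochner_Integration.integral_cong[OF refl])
    fix z :: real
    show "indicator {0<..<1} z * (\<integral>s. indicator {0..<z} s * g s \<partial>lborel) * \<theta>' z = (\<integral>s. H (z, s) \<partial>lborel)"
    proof (cases "0 < z \<and> z < 1")
      case True
      have "(\<integral>s. H (z, s) \<partial>lborel) = (\<integral>s. (indicator {0..<z} s * g s) * \<theta>' z \<partial>lborel)"
        by (rule Bochner_Integration.integral_cong) (use True in \<open>auto simp: H_def indicator_def\<close>)
      also have "\<dots> = (\<integral>s. indicator {0..<z} s * g s \<partial>lborel) * \<theta>' z"
        by (rule integral_mult_left_zero)
      finally show ?thesis using True by simp
    qed (auto simp: H_def)
  qed
  also have "\<dots> = (\<integral>s. (\<integral>z. H (z, s) \<partial>lborel) \<partial>lborel)"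
    using lborel_pair.Fubini_integral[of "\<lambda>z s. H (z, s)"] Hint by simp
  also have "\<dots> = (\<integral>s. - (g s * \<theta> s) \<partial>lborel)"
  proof (rule Bochner_Integration.integral_cong[OF refl])
    fix s :: real
    show "(\<integral>z. H (z, s) \<partial>lborel) = - (g s * \<theta> s)"
    proof (cases "0 \<le> s \<and> s < 1")
      case True
      have "(\<integral>z. H (z, s) \<partial>lborel) = (\<integral>z. g s * (indicator {s<..<1} z * \<theta>' z) \<partial>lborel)"
        by (rule Bochner_Integration.integral_cong) (use True in \<open>auto simp: H_def indicator_def\<close>)
      also have "\<dots> = g s * (\<theta> 1 - \<theta> s)"
      proof -
        have ftc: "(LBINT z=s..(1::real). \<theta>' z) = \<theta> 1 - \<theta> s"
          using True
          by (intro interval_integral_FTC_finite continuous_on_subset[OF cont])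
            (auto intro: has_field_derivative_at_within d simp: has_real_derivative_iff_has_vector_derivative[symmetric])
        then show ?thesis using True by (simp add: interval_integral_Ioo set_lebesgue_integral_def)
      qed
      finally show ?thesis using t1[of 1] by simp
    next
      case False
      have "H (z, s) = 0" for z using False by (auto simp: H_def indicator_def)
      moreover have "\<theta> s = 0"
        using False t0[of s] t1[of s] by linarith
      ultimately show ?thesis by simp
    qed
  qed
  finally show ?thesis by simp
qed

lemma ibp_const:
  fixes \<theta> \<theta>' :: "real \<Rightarrow> real"
  assumes d: "\<And>z. (\<theta> has_real_derivative \<theta>' z) (at z)"
    and cont: "continuous_on UNIV \<theta>'"
    and t0: "\<theta> 0 = 0" and t1: "\<theta> 1 = 0"
  shows "(\<integral>z. indicator {0<..<1} z * \<theta>' z \<partial>lborel) = 0"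
proof -
  have ftc: "(LBINT z=(0::real)..(1::real). \<theta>' z) = \<theta> 1 - \<theta> 0"
    by (intro interval_integral_FTC_finite continuous_on_subset[OF cont])
      (auto intro: has_field_derivative_at_within d simp: has_real_derivative_iff_has_vector_derivative[symmetric])
  then show ?thesis using t0 t1 by (simp add: interval_integral_Ioo set_lebesgue_integral_def)
qed

lemma Gi_cont:
  fixes g :: "real \<Rightarrow> real"
  assumes g: "integrable lborel g"
  shows "continuous_on UNIV (\<lambda>z. \<integral>s. indicator {0..<z} s * g s \<partial>lborel)"
proof -
  have gm[measurable]: "g \<in> borel_measurable borel" using g by auto
  have "isCont (\<lambda>z. \<integral>s. indicator {0..<z} s * g s \<partial>lborel) z" for z
  proof (rule continuous_at_sequentiallyI)
    fix X :: "nat \<Rightarrow> real" assume X: "X \<longlonglongrightarrow> z"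
    show "(\<lambda>n. \<integral>s. indicator {0..<X n} s * g s \<partial>lborel) \<longlonglongrightarrow> (\<integral>s. indicator {0..<z} s * g s \<partial>lborel)"
    proof (rule integral_dominated_convergence[where w="\<lambda>s. norm (g s)"])
      show "AE s in lborel. (\<lambda>n. indicator {0..<X n} s * g s) \<longlonglongrightarrow> indicator {0..<z} s * g s"
        using AE_lborel_singleton[of z]
      proof eventually_elim
        case (elim s)
        show ?case
        proof (cases "s < z")
          case True
          then have "\<forall>\<^sub>F n in sequentially. s < X n" using X order_tendstoD(1) by blast
          then have "\<forall>\<^sub>F n in sequentially. indicator {0..<X n} s * g s = indicator {0..<z} s * g s"
            by eventually_elim (use True in \<open>auto simp: indicator_def\<close>)
          then show ?thesis by (rule tendsto_eventually)
        next
          case False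
          with elim have "z < s" by auto
          then have "\<forall>\<^sub>F n in sequentially. X n < s" using X order_tendstoD(2) by blast
          then have "\<forall>\<^sub>F n in sequentially. indicator {0..<X n} s * g s = indicator {0..<z} s * g s"
            by eventually_elim (use \<open>z < s\<close> in \<open>auto simp: indicator_def\<close>)
          then show ?thesis by (rule tendsto_eventually)
        qed
      qed
      show "AE s in lborel. norm (indicator {0..<X n} s * g s) \<le> norm (g s)" for n
        by (auto simp: indicator_def)
    qed (use g in auto)
  qed
  then show ?thesis by (simp add: continuous_at_imp_continuous_on)
qed

lemma Gi_bound:
  fixes g :: "real \<Rightarrow> real"
  assumes g: "integrable lborel g"
  shows "\<bar>\<integral>s. indicator {0..<z} s * g s \<partial>lborel\<bar> \<le> (\<integral>s. \<bar>g s\<bar> \<partial>lborel)"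
proof -
  have "\<bar>\<integral>s. indicator {0..<z} s * g s \<partial>lborel\<bar> \<le> (\<integral>s. \<bar>indicator {0..<z} s * g s\<bar> \<partial>lborel)"
    using integral_abs_bound by blast
  also have "\<dots> \<le> (\<integral>s. \<bar>g s\<bar> \<partial>lborel)"
  proof -
    have gm[measurable]: "g \<in> borel_measurable borel" using g by auto
    have "integrable lborel (\<lambda>s. indicator {0..<z} s * g s)"
      by (rule Bochner_Integration.integrable_bound[OF g]) (auto simp: indicator_def)
    then show ?thesis
      using g by (intro integral_mono) (auto simp: indicator_def)
  qed
  finally show ?thesis .
qed

lemma mtrick:
  fixes q :: "real \<Rightarrow> real"
  assumes q: "integrable lborel q" and q2: "integrable lborel (\<lambda>x. (q x)\<^sup>2)"
    and z: "\<And>x. x \<notin> {0<..<1} \<Longrightarrow> q x = 0"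
  shows "(\<integral>x. \<bar>q x\<bar> \<partial>lborel)\<^sup>2 \<le> (\<integral>x. (q x)\<^sup>2 \<partial>lborel)"
proof -
  define m where "m = (\<integral>x. \<bar>q x\<bar> \<partial>lborel)"
  have i1: "integrable lborel (indicator {0<..<1::real} :: real \<Rightarrow> real)"
    by (auto simp: integrable_indicator_iff emeasure_lborel_Ioo)
  have one: "(\<integral>x. indicator {0<..<1::real} x \<partial>lborel) = (1::real)"
    by (simp add: measure_lborel_Ioo)
  have "0 \<le> (\<integral>x. indicator {0<..<1::real} x * (\<bar>q x\<bar> - m)\<^sup>2 \<partial>lborel)"
    by (intro integral_nonneg_AE) auto
  also have "\<dots> = (\<integral>x. (q x)\<^sup>2 - 2 * m * \<bar>q x\<bar> + m\<^sup>2 * indicator {0<..<1::real} x \<partial>lborel)"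
  proof (rule Bochner_Integration.integral_cong[OF refl])
    fix x :: real
    show "indicator {0<..<1} x * (\<bar>q x\<bar> - m)\<^sup>2 = (q x)\<^sup>2 - 2 * m * \<bar>q x\<bar> + m\<^sup>2 * indicator {0<..<1} x"
      using z[of x] by (cases "x \<in> {0<..<1}") (auto simp: power2_eq_square algebra_simps)
  qed
  also have "\<dots> = (\<integral>x. (q x)\<^sup>2 \<partial>lborel) - 2 * m * m + m\<^sup>2"
    using q q2 i1 by (simp add: one m_def)
  finally show ?thesis by (simp add: m_def power2_eq_square)
qed

lemma cont_ae_eq0:
  fixes f h :: "real \<Rightarrow> real"
  assumes f: "continuous_on {0..<1} f" and h: "continuous_on {0..<1} h"
    and ae: "AE z in lborel. z \<in> {0<..<1} \<longrightarrow> f z = h z"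
  shows "f 0 = h 0"
proof (rule ccontr)
  assume ne: "f 0 \<noteq> h 0"
  define d where "d = \<bar>f 0 - h 0\<bar>"
  have d: "d > 0" using ne by (simp add: d_def)
  have "continuous (at 0 within {0..<1}) (\<lambda>z. f z - h z)"
    using continuous_on_diff[OF f h] by (simp add: continuous_on_eq_continuous_within)
  then obtain e where e: "e > 0" "\<And>z. z \<in> {0..<1} \<Longrightarrow> dist z 0 < e \<Longrightarrow> dist (f z - h z) (f 0 - h 0) < d"
    using d unfolding continuous_within_eps_delta by blast
  define e' where "e' = min e 1"
  have e': "e' > 0" "e' \<le> 1" "e' \<le> e" using e by (auto simp: e'_def)
  obtain N where N: "N \<in> null_sets lborel" "{z \<in> space lborel. \<not> (z \<in> {0<..<1} \<longrightarrow> f z = h z)} \<subseteq> N"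
    using ae unfolding eventually_ae_filter by blast
  have "{0<..<e'} \<subseteq> N"
  proof
    fix z assume z: "z \<in> {0<..<e'}"
    then have "z \<in> {0..<1}" "dist z 0 < e" using e' by auto
    then have "dist (f z - h z) (f 0 - h 0) < d" using e by blast
    then have "f z \<noteq> h z" by (auto simp: d_def dist_real_def)
    then show "z \<in> N" using N(2) z e' by auto
  qed
  then have "emeasure lborel {0<..<e'} \<le> emeasure lborel N" by (intro emeasure_mono) (use N in auto)
  then show False using N e' by (simp add: null_setsD1 emeasure_lborel_Ioo)
qed


definition bmp :: "nat \<Rightarrow> real \<Rightarrow> real \<Rightarrow> real \<Rightarrow> real" where
  "bmp n a b t = F 0 ((real n + 1) * t + (- (real n + 1) * a)) * F 0 ((- (real n + 1)) * t + (real n + 1) * b)"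

lemma gen1_bmp: "gen1 (bmp n a b)"
  unfolding bmp_def[abs_def] by (intro gen1.intros)

lemma F0_pos: "s > 0 \<Longrightarrow> F 0 s = exp (- 1 / s)" by (simp add: F_def)

lemma F0_bounds: "0 \<le> F 0 s" "F 0 s \<le> 1"
  by (auto simp: F_def)

lemma bmp_bounds: "0 \<le> bmp n a b t" "bmp n a b t \<le> 1"
  unfolding bmp_def using F0_bounds by (auto intro: mult_nonneg_nonneg mult_le_one)

lemma bmp_supp: "bmp n a b t \<noteq> 0 \<Longrightarrow> a < t \<and> t < b"
proof -
  assume ne: "bmp n a b t \<noteq> 0"
  then have "(real n + 1) * t + (- (real n + 1) * a) > 0" "(- (real n + 1)) * t + (real n + 1) * b > 0"
    unfolding bmp_def F_def by (auto split: if_splits)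
  then have "(real n + 1) * (t - a) > 0" "(real n + 1) * (b - t) > 0" by (auto simp: algebra_simps)
  then show ?thesis by (auto simp: zero_less_mult_iff)
qed

lemma bmp_lim: "(\<lambda>n. bmp n a b t) \<longlonglongrightarrow> indicator {a<..<b} t"
proof (cases "a < t \<and> t < b")
  case True
  have l: "(\<lambda>n. exp (- 1 / ((real n + 1) * d))) \<longlonglongrightarrow> 1" if d: "d > 0" for d :: real
  proof -
    have "(\<lambda>n. - 1 / ((real n + 1) * d)) \<longlonglongrightarrow> 0"
      using d by real_asymp
    from tendsto_exp[OF this] show ?thesis by simp
  qed
  have eq: "bmp n a b t = exp (- 1 / ((real n + 1) * (t - a))) * exp (- 1 / ((real n + 1) * (b - t)))" for n
  proof -
    have "(real n + 1) * t + (- (real n + 1) * a) = (real n + 1) * (t - a)"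
         "(- (real n + 1)) * t + (real n + 1) * b = (real n + 1) * (b - t)" by (auto simp: algebra_simps)
    moreover have "(real n + 1) * (t - a) > 0" "(real n + 1) * (b - t) > 0" using True by auto
    ultimately show ?thesis unfolding bmp_def by (simp add: F_def)
  qed
  show ?thesis unfolding eq using True tendsto_mult[OF l l, of "t - a" "b - t"] by simp
next
  case False
  then have "bmp n a b t = 0" for n using bmp_supp by blast
  then show ?thesis using False by simp
qed

lemma smooth1_cont: "smooth1 f \<Longrightarrow> continuous_on UNIV f"
proof -
  assume "smooth1 f"
  then obtain f' where "\<And>x. (f has_real_derivative f' x) (at x)" using smooth1_deriv by blast
  then have "\<And>x. isCont f x" using DERIV_isCont by blast
  then show ?thesis by (simp add: continuous_at_imp_continuous_on)
qed

lemma gen1_cont: "gen1 f \<Longrightarrow> continuous_on UNIV f"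
  using gen1_smooth1 smooth1_cont by blast

lemma henstock_lebesgue01:
  fixes h :: "real \<Rightarrow> real"
  assumes c: "continuous_on UNIV h" and z: "\<And>t. t \<notin> {0..1} \<Longrightarrow> h t = 0"
  shows "integrable lborel h" "integral {0..1} h = (\<integral>t. h t \<partial>lborel)"
proof -
  have si: "set_integrable lborel {0..1} h"
    by (rule borel_integrable_atLeastAtMost') (use c continuous_on_subset in blast)
  have eq: "(\<lambda>t. indicator {0..1} t *\<^sub>R h t) = h"
    using z by (auto simp: indicator_def fun_eq_iff)
  show "integrable lborel h" using si unfolding set_integrable_def eq .
  show "integral {0..1} h = (\<integral>t. h t \<partial>lborel)"
    using set_borel_integral_eq_integral(2)[OF si] unfolding set_lebesgue_integral_def eq by simp
qed

lemma antider:
  fixes h :: "real \<Rightarrow> real"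
  assumes h: "smooth1 h" and supp: "\<And>t. h t \<noteq> 0 \<Longrightarrow> m < t \<and> t < M"
    and m: "0 < m" and M: "M < 1" and mM: "m \<le> M" and int0: "integral {0..1} h = 0"
  defines "\<theta> \<equiv> \<lambda>z. integral {0..z} h"
  shows "smooth1 \<theta>" "\<And>z. (\<theta> has_real_derivative h z) (at z)"
    "\<And>z. z \<le> m \<Longrightarrow> \<theta> z = 0" "\<And>z. z \<ge> M \<Longrightarrow> \<theta> z = 0"
proof -
  have c: "continuous_on UNIV h" using smooth1_cont[OF h] .
  have low: "\<theta> z = 0" if "z \<le> m" for z
  proof -
    have "integral {0..z} h = integral {0..z} (\<lambda>_. 0::real)"
    proof (rule integral_cong)
      fix x assume "x \<in> {0..z}"
      then show "h x = 0" using supp[of x] that by force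
    qed
    then show ?thesis by (simp add: \<theta>_def)
  qed
  show "\<theta> z = 0" if "z \<le> m" for z using low that .
  show d: "(\<theta> has_real_derivative h z) (at z)" for z
  proof (cases "z < m")
    case True
    have "h z = 0" using supp[of z] True by force
    then have d0: "((\<lambda>_. 0) has_real_derivative h z) (at z)" by simp
    have eq: "\<And>x. x \<in> {..<m} \<Longrightarrow> (\<lambda>_. 0) x = \<theta> x" using low by simp
    have zm: "z \<in> {..<m}" using \<open>z < m\<close> by simp
    show ?thesis
      by (rule has_field_derivative_transform_within_open[OF d0 open_lessThan zm eq])
  next
    case False
    then have z0: "0 < z" using m by auto
    have cc: "continuous_on {0..z+1} h" using continuous_on_subset[OF c] by blast
    have zz: "z \<in> {0..z+1}" using z0 by simp
    have dd: "(\<theta> has_real_derivative h z) (at z within {0..z+1})"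
      unfolding \<theta>_def by (rule integral_has_real_derivative[OF cc zz])
    have i: "z \<in> interior {0..z+1}" using z0 by simp
    have "at z within {0..z+1} = at z" by (rule at_within_interior[OF i])
    with dd show ?thesis by simp
  qed
  show "\<theta> z = 0" if "z \<ge> M" for z
  proof -
    have hz: "h integrable_on {0..z}"
      by (rule integrable_continuous_real[OF continuous_on_subset[OF c]]) simp
    have h1: "h integrable_on {0..1}"
      by (rule integrable_continuous_real[OF continuous_on_subset[OF c]]) simp
    have z0: "integral {M..w} h = 0" if "M \<le> w" for w
    proof -
      have "integral {M..w} h = integral {M..w} (\<lambda>_. 0::real)"
      proof (rule integral_cong)
        fix x assume "x \<in> {M..w}"
        then show "h x = 0" using supp[of x] by force
      qed
      then show ?thesis by simp
    qed
    have M0: "0 \<le> M" using m mM by simp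
    have "integral {0..z} h = integral {0..M} h + integral {M..z} h"
      using Henstock_Kurzweil_Integration.integral_combine[OF M0 that hz] by simp
    also have "\<dots> = integral {0..M} h" using z0 that by simp
    also have "\<dots> = integral {0..M} h + integral {M..1} h" using z0 M by simp
    also have "\<dots> = integral {0..1} h"
      using Henstock_Kurzweil_Integration.integral_combine[OF M0 _ h1] M by simp
    finally show ?thesis using int0 by (simp add: \<theta>_def)
  qed
  obtain Dh where Dh: "Dh 0 = h" "\<And>n x. (Dh n has_real_derivative Dh (Suc n) x) (at x)"
    using h unfolding smooth1_def by blast
  show "smooth1 \<theta>" unfolding smooth1_def
  proof (rule exI[of _ "\<lambda>n. case n of 0 \<Rightarrow> \<theta> | Suc k \<Rightarrow> Dh k"], intro conjI allI)
    fix n x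
    show "((case n of 0 \<Rightarrow> \<theta> | Suc k \<Rightarrow> Dh k) has_real_derivative (case Suc n of 0 \<Rightarrow> \<theta> | Suc k \<Rightarrow> Dh k) x) (at x)"
    proof (cases n)
      case 0
      then show ?thesis using d[of x] Dh(1) by simp
    next
      case (Suc k)
      then show ?thesis using Dh(2)[of k x] by simp
    qed
  qed simp
qed


lemma genm_prod:
  fixes f :: "'i \<Rightarrow> 'b::euclidean_space \<Rightarrow> real"
  shows "finite I \<Longrightarrow> (\<And>i. i \<in> I \<Longrightarrow> genm (f i)) \<Longrightarrow> genm (\<lambda>x. \<Prod>i\<in>I. f i x)"
proof (induction I rule: finite_induct)
  case empty
  have "genm (\<lambda>x::'b. 1::real)" by (rule gmC)
  then show ?case by simp
next
  case (insert i I)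
  have "genm (\<lambda>x. f i x * (\<Prod>i\<in>I. f i x))"
    using insert by (intro gmM) auto
  then show ?case using insert by simp
qed

lemma frechet_dir:
  fixes f :: "'b::euclidean_space \<Rightarrow> real"
  assumes df: "f differentiable (at p)"
    and d: "((\<lambda>t. f (p + t *\<^sub>R v)) has_real_derivative d) (at 0)"
  shows "frechet_derivative f (at p) v = d"
proof -
  let ?D = "frechet_derivative f (at p)"
  have D: "(f has_derivative ?D) (at p)" using df frechet_derivative_works by blast
  have lin: "linear ?D" using D has_derivative_linear by blast
  have l: "((\<lambda>t::real. p + t *\<^sub>R v) has_derivative (\<lambda>t. t *\<^sub>R v)) (at 0)"
    by (auto intro!: derivative_eq_intros)
  have D': "(f has_derivative ?D) (at (p + 0 *\<^sub>R v))" using D by simp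
  have "((\<lambda>t. f (p + t *\<^sub>R v)) has_derivative (\<lambda>t. ?D (t *\<^sub>R v))) (at 0)"
    using has_derivative_compose[OF l D'] by simp
  moreover have "(\<lambda>t. ?D (t *\<^sub>R v)) = (\<lambda>t. ?D v * t)"
    using linear_scale[OF lin] by (simp add: fun_eq_iff mult.commute)
  ultimately have "((\<lambda>t. f (p + t *\<^sub>R v)) has_real_derivative ?D v) (at 0)"
    by (simp add: has_field_derivative_def)
  then show ?thesis using d DERIV_unique by blast
qed

definition Pb :: "nat \<Rightarrow> 'a::euclidean_space \<Rightarrow> 'a \<Rightarrow> 'a \<Rightarrow> real" where
  "Pb n a b x = (\<Prod>i\<in>Basis. bmp n (a \<bullet> i) (b \<bullet> i) (x \<bullet> i))"

lemma Pb_bounds: "0 \<le> Pb n a b x" "Pb n a b x \<le> 1"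
  unfolding Pb_def using bmp_bounds by (auto intro: prod_nonneg prod_le_1)

lemma Pb_supp: "Pb n a b x \<noteq> 0 \<Longrightarrow> x \<in> box a b"
proof -
  assume "Pb n a b x \<noteq> 0"
  then have "\<forall>i\<in>Basis. bmp n (a \<bullet> i) (b \<bullet> i) (x \<bullet> i) \<noteq> 0"
    unfolding Pb_def by (simp add: prod_zero_iff)
  then show ?thesis unfolding mem_box using bmp_supp by blast
qed

lemma Pb_lim: "(\<lambda>n. Pb n a b x) \<longlonglongrightarrow> indicator (box a b) x"
proof -
  have "(\<lambda>n. \<Prod>i\<in>Basis. bmp n (a \<bullet> i) (b \<bullet> i) (x \<bullet> i)) \<longlonglongrightarrow> (\<Prod>i\<in>Basis. indicator {a \<bullet> i<..<b \<bullet> i} (x \<bullet> i))"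
    by (intro tendsto_prod bmp_lim)
  moreover have "(\<Prod>i\<in>Basis. indicator {a \<bullet> i<..<b \<bullet> i} (x \<bullet> i) :: real) = indicator (box a b) x"
    by (auto simp: indicator_def mem_box prod_zero_iff)
  ultimately show ?thesis unfolding Pb_def by simp
qed

lemma Pb_cont: "continuous_on UNIV (Pb n a b)"
proof -
  have "continuous_on UNIV (\<lambda>x. bmp n (a \<bullet> i) (b \<bullet> i) (x \<bullet> i))" for i
    using continuous_on_compose2[OF gen1_cont[OF gen1_bmp] continuous_on_inner[OF continuous_on_id continuous_on_const]]
    by auto
  then show ?thesis unfolding Pb_def[abs_def] by (intro continuous_on_prod) auto
qed

lemma test_phi:
  fixes G :: "'a::euclidean_space set" and n :: nat and a b :: 'a
  assumes th: "smooth1 \<theta>" and d: "\<And>z. (\<theta> has_real_derivative \<theta>' z) (at z)"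
    and lo: "\<And>z. z \<le> m \<Longrightarrow> \<theta> z = 0" and hi: "\<And>z. z \<ge> M \<Longrightarrow> \<theta> z = 0"
    and m: "0 < m" and M: "M < 1"
    and sub: "cbox a b \<subseteq> G"
  defines "\<phi> \<equiv> \<lambda>p::'a \<times> real. Pb n a b (fst p) * \<theta> (snd p)"
  shows "test_fun (G \<times> {0<..<1}) \<phi>"
    and "\<And>p. frechet_derivative \<phi> (at p) (0, 1) = Pb n a b (fst p) * \<theta>' (snd p)"
proof -
  have eqf: "\<phi> = (\<lambda>p. (\<Prod>i\<in>Basis. bmp n (a \<bullet> i) (b \<bullet> i) (p \<bullet> (i, 0))) * \<theta> (p \<bullet> (0, 1)))"
    unfolding \<phi>_def Pb_def by (auto simp: fun_eq_iff inner_Pair_0)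
  have gm: "genm \<phi>"
    unfolding eqf
  proof (rule gmM)
    show "genm (\<lambda>p::'a\<times>real. \<Prod>i\<in>Basis. bmp n (a \<bullet> i) (b \<bullet> i) (p \<bullet> (i, 0)))"
      by (rule genm_prod) (auto intro!: gmB gen1_smooth1 gen1_bmp)
    show "genm (\<lambda>p::'a\<times>real. \<theta> (p \<bullet> (0, 1)))" by (rule gmB[OF th])
  qed
  have supp: "{p. \<phi> p \<noteq> 0} \<subseteq> cbox a b \<times> {m..M}"
  proof
    fix p assume "p \<in> {p. \<phi> p \<noteq> 0}"
    then have "Pb n a b (fst p) \<noteq> 0" "\<theta> (snd p) \<noteq> 0" by (auto simp: \<phi>_def)
    then have "fst p \<in> box a b" "m < snd p" "snd p < M"
      using Pb_supp lo[of "snd p"] hi[of "snd p"] by force+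
    then show "p \<in> cbox a b \<times> {m..M}"
      using box_subset_cbox by (cases p) force
  qed
  have cl: "closure {p. \<phi> p \<noteq> 0} \<subseteq> cbox a b \<times> {m..M}"
    by (rule closure_minimal[OF supp]) (intro closed_Times closed_cbox closed_atLeastAtMost)
  show "test_fun (G \<times> {0<..<1}) \<phi>"
    unfolding test_fun_def
  proof (intro conjI)
    show "smooth_fun \<phi>" by (rule genm_smooth[OF gm])
    have "bounded (cbox a b \<times> {m..M})" by (intro bounded_Times) auto
    then have "bounded {p. \<phi> p \<noteq> 0}" using supp bounded_subset by blast
    then show "compact (closure {p. \<phi> p \<noteq> 0})" by (simp add: compact_closure)
    show "closure {p. \<phi> p \<noteq> 0} \<subseteq> G \<times> {0<..<1}"
      using cl sub m M by force
  qed
  fix p :: "'a \<times> real"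
  show "frechet_derivative \<phi> (at p) (0, 1) = Pb n a b (fst p) * \<theta>' (snd p)"
  proof (rule frechet_dir)
    obtain D where "\<And>x. (\<phi> has_derivative D x) (at x)" using genm_deriv[OF gm] by blast
    then show "\<phi> differentiable (at p)" unfolding differentiable_def by blast
    have e: "(\<lambda>t. \<phi> (p + t *\<^sub>R (0, 1))) = (\<lambda>t. Pb n a b (fst p) * \<theta> (snd p + t))"
      by (auto simp: \<phi>_def fun_eq_iff)
    have "((\<lambda>t. \<theta> (snd p + t)) has_real_derivative \<theta>' (snd p + 0) * 1) (at 0)"
      by (rule DERIV_chain2[OF d]) (auto intro!: derivative_eq_intros)
    then have "((\<lambda>t. \<theta> (snd p + t)) has_real_derivative \<theta>' (snd p)) (at 0)" by simp
    then show "((\<lambda>t. \<phi> (p + t *\<^sub>R (0, 1))) has_real_derivative Pb n a b (fst p) * \<theta>' (snd p)) (at 0)"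
      unfolding e by (auto intro: DERIV_cmult)
  qed
qed


lemma box_Pair_eq: "box (a, c) (b, d) = box a b \<times> box c d"
  by (auto simp: box_def Basis_prod_def ball_Un)

lemma AE_fst_pair:
  assumes "AE x in (lborel::'x::euclidean_space measure). P x"
  shows "AE p in (lborel::'x measure) \<Otimes>\<^sub>M (lborel::'y::euclidean_space measure). P (fst p)"
proof -
  obtain N where N: "N \<in> null_sets lborel" "{x \<in> space lborel. \<not> P x} \<subseteq> N"
    using assms unfolding eventually_ae_filter by blast
  have "N \<times> UNIV \<in> null_sets ((lborel::'x measure) \<Otimes>\<^sub>M (lborel::'y measure))"
    using N(1) by (simp add: null_sets_def lborel.emeasure_pair_measure_Times)
  moreover have "{p \<in> space (lborel \<Otimes>\<^sub>M lborel). \<not> P (fst p)} \<subseteq> N \<times> (UNIV::'y set)"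
    using N(2) by auto
  ultimately show ?thesis unfolding eventually_ae_filter by blast
qed

locale TS =
  fixes G :: "'a::euclidean_space set" and u0 g0 :: "'a \<times> real \<Rightarrow> real"
  assumes Gopen: "open G" and Gbdd: "bounded G"
    and u0m[measurable]: "u0 \<in> borel_measurable borel" and g0m[measurable]: "g0 \<in> borel_measurable borel"
    and u0z: "\<And>p. p \<notin> G \<times> {0<..<1} \<Longrightarrow> u0 p = 0"
    and g0z: "\<And>p. p \<notin> G \<times> {0<..<1} \<Longrightarrow> g0 p = 0"
    and u02: "integrable lborel (\<lambda>p. (u0 p)\<^sup>2)" and g02: "integrable lborel (\<lambda>p. (g0 p)\<^sup>2)"
  fixes \<rho> :: "real \<Rightarrow> real" and B\<rho> :: real
  assumes \<rho>c: "continuous_on UNIV \<rho>" and \<rho>B: "\<And>t. \<bar>\<rho> t\<bar> \<le> B\<rho>"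
    and \<rho>s: "\<And>t. \<rho> t \<noteq> 0 \<Longrightarrow> 0 < t \<and> t < 1" and \<rho>i: "integrable lborel \<rho>" and \<rho>1: "(\<integral>t. \<rho> t \<partial>lborel) = 1"
begin

abbreviation "U \<equiv> G \<times> {0<..<(1::real)}"

definition "Gi x z = (\<integral>s. indicator {0..<z} s * g0 (x, s) \<partial>lborel)"

lemma Gi_meas[measurable]: "(\<lambda>p. Gi (fst p) (snd p)) \<in> borel_measurable borel"
proof -
  have e: "(\<lambda>p. Gi (fst p) (snd p)) = (\<lambda>p. \<integral>s. (if 0 \<le> s \<and> s < snd p then g0 (fst p, s) else 0) \<partial>lborel)"
    unfolding Gi_def by (auto simp: indicator_def fun_eq_iff intro!: Bochner_Integration.integral_cong)
  have m: "(\<lambda>q. if 0 \<le> snd q \<and> snd q < snd (fst q) then g0 (fst (fst q), snd q) else 0)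
     \<in> borel_measurable ((borel :: ('a \<times> real) measure) \<Otimes>\<^sub>M lborel)"
  proof -
    have g0m2[measurable]: "g0 \<in> borel_measurable (borel \<Otimes>\<^sub>M borel)" by (simp add: borel_prod)
    have "(\<lambda>q. if 0 \<le> snd q \<and> snd q < snd (fst q) then g0 (fst (fst q), snd q) else 0)
     \<in> borel_measurable (((borel :: 'a measure) \<Otimes>\<^sub>M (borel :: real measure)) \<Otimes>\<^sub>M borel)" by measurable
    then show ?thesis by (simp add: measurable_cong_sets[OF sets_pair_measure_cong[OF refl sets_lborel] refl] borel_prod)
  qed
  show ?thesis unfolding e
    by (rule lborel.borel_measurable_lebesgue_integral) (use m in \<open>simp add: case_prod_beta\<close>)
qed

lemma U_open: "open U" using Gopen by (intro open_Times) auto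

lemma U_ind_int: "integrable lborel (indicator U :: 'a \<times> real \<Rightarrow> real)"
proof -
  have "bounded U" using Gbdd by (intro bounded_Times) auto
  then obtain a b where ab: "U \<subseteq> cbox a b" using bounded_subset_cbox_symmetric by blast
  have "emeasure lborel U \<le> emeasure lborel (cbox a b)"
    by (rule emeasure_mono[OF ab]) simp
  then have "emeasure lborel U < \<infinity>" using emeasure_lborel_cbox_finite[of a b] by simp
  moreover have "U \<in> sets lborel" using U_open by simp
  ultimately show ?thesis by (simp add: integrable_indicator_iff)
qed

lemma \<rho>m[measurable]: "\<rho> \<in> borel_measurable borel"
  using \<rho>c by (simp add: borel_measurable_continuous_onI)

lemma abs_le_sq: "\<bar>x::real\<bar> \<le> 1 + x\<^sup>2"
proof (cases "\<bar>x\<bar> \<le> 1")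
  case True
  then show ?thesis using zero_le_power2[of x] by linarith
next
  case False
  have "\<bar>x\<bar> * 1 \<le> \<bar>x\<bar> * \<bar>x\<bar>" using False by (intro mult_left_mono) auto
  moreover have "\<bar>x\<bar> * \<bar>x\<bar> = x\<^sup>2" by (simp add: power2_eq_square)
  ultimately show ?thesis by linarith
qed

lemma int_of_sq:
  fixes f :: "'a \<times> real \<Rightarrow> real"
  assumes fm: "f \<in> borel_measurable borel" and fz: "\<And>p. p \<notin> U \<Longrightarrow> f p = 0" and f2: "integrable lborel (\<lambda>p. (f p)\<^sup>2)"
  shows "integrable lborel f"
proof (rule Bochner_Integration.integrable_bound[where f="\<lambda>p. indicator U p + (f p)\<^sup>2"])
  show "integrable lborel (\<lambda>p. indicator U p + (f p)\<^sup>2)"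
    using U_ind_int f2 by (rule Bochner_Integration.integrable_add)
  show "f \<in> borel_measurable lborel" using fm by simp
  show "AE p in lborel. norm (f p) \<le> norm (indicator U p + (f p)\<^sup>2)"
  proof (intro AE_I2)
    fix p show "norm (f p) \<le> norm (indicator U p + (f p)\<^sup>2)"
      using abs_le_sq[of "f p"] fz[of p] by (cases "p \<in> U") auto
  qed
qed

lemma u0_int: "integrable lborel u0" by (rule int_of_sq[OF u0m u0z u02])
lemma g0_int: "integrable lborel g0" by (rule int_of_sq[OF g0m g0z g02])

lemma int_PP: "integrable lborel (f :: 'a \<times> real \<Rightarrow> real) \<Longrightarrow> integrable ((lborel::'a measure) \<Otimes>\<^sub>M (lborel::real measure)) f"
  by (simp add: lborel_prod)

definition "good x \<longleftrightarrow> integrable lborel (\<lambda>z. u0 (x, z)) \<and> integrable lborel (\<lambda>z. g0 (x, z))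
   \<and> integrable lborel (\<lambda>z. (u0 (x, z))\<^sup>2) \<and> integrable lborel (\<lambda>z. (g0 (x, z))\<^sup>2)"

lemma AE_good: "AE x in lborel. good x"
proof -
  have "AE x in lborel. integrable lborel (\<lambda>z. u0 (x, z))"
    using lborel_pair.AE_integrable_fst'[OF int_PP[OF u0_int]] by simp
  moreover have "AE x in lborel. integrable lborel (\<lambda>z. g0 (x, z))"
    using lborel_pair.AE_integrable_fst'[OF int_PP[OF g0_int]] by simp
  moreover have "AE x in lborel. integrable lborel (\<lambda>z. (u0 (x, z))\<^sup>2)"
    using lborel_pair.AE_integrable_fst'[OF int_PP[OF u02]] by simp
  moreover have "AE x in lborel. integrable lborel (\<lambda>z. (g0 (x, z))\<^sup>2)"
    using lborel_pair.AE_integrable_fst'[OF int_PP[OF g02]] by simp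
  ultimately show ?thesis unfolding good_def by eventually_elim auto
qed

definition "S x = (\<integral>s. \<bar>g0 (x, s)\<bar> \<partial>lborel)"

lemma S_int: "integrable lborel S"
  unfolding S_def[abs_def]
  using lborel_pair.integrable_fst'[OF int_PP[OF integrable_abs[OF g0_int]]] by simp

lemma S_nonneg: "0 \<le> S x" unfolding S_def by simp

lemma Gi_bnd: "good x \<Longrightarrow> \<bar>Gi x z\<bar> \<le> S x"
  unfolding Gi_def S_def good_def by (intro Gi_bound) auto

lemma Gi_cnt: "good x \<Longrightarrow> continuous_on UNIV (Gi x)"
  unfolding Gi_def[abs_def] good_def by (intro Gi_cont) auto

end


lemma meas_int_snd:
  fixes F :: "'x::euclidean_space \<times> real \<Rightarrow> real"
  assumes "F \<in> borel_measurable borel"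
  shows "(\<lambda>x. \<integral>z. F (x, z) \<partial>lborel) \<in> borel_measurable borel"
proof -
  have "F \<in> borel_measurable ((borel::'x measure) \<Otimes>\<^sub>M lborel)"
    using assms by (simp add: measurable_cong_sets[OF sets_pair_measure_cong[OF refl sets_lborel] refl] borel_prod)
  then show ?thesis
    by (rule lborel.borel_measurable_lebesgue_integral[where f="\<lambda>x z. F (x, z)", simplified])
qed

lemma id_prod_meas[measurable]: "(\<lambda>x::'x::euclidean_space \<times> 'y::euclidean_space. x) \<in> borel \<rightarrow>\<^sub>M borel \<Otimes>\<^sub>M borel"
  by (simp add: borel_prod)

context TS
begin

lemma U_borel[measurable]: "G \<times> {0<..<1::real} \<in> sets borel"
  using U_open by simp

definition "c x = (\<integral>z. (u0 (x, z) - Gi x z) * \<rho> z \<partial>lborel)"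
definition "v p = c (fst p) + Gi (fst p) (snd p)"

lemma c_meas[measurable]: "c \<in> borel_measurable borel"
proof -
  have "(\<lambda>p. (u0 p - Gi (fst p) (snd p)) * \<rho> (snd p)) \<in> borel_measurable borel" by measurable
  from meas_int_snd[OF this] show ?thesis by (simp add: c_def[abs_def])
qed

lemma v_meas[measurable]: "v \<in> borel_measurable borel"
  unfolding v_def[abs_def] by measurable

lemma Finteg: "integrable ((lborel::'a measure) \<Otimes>\<^sub>M (lborel::real measure)) (\<lambda>p. (u0 p - Gi (fst p) (snd p)) * \<rho> (snd p))"
proof (rule Bochner_Integration.integrable_bound[where f="\<lambda>p. B\<rho> * \<bar>u0 p\<bar> + S (fst p) * \<bar>\<rho> (snd p)\<bar>"])
  show "integrable (lborel \<Otimes>\<^sub>M lborel) (\<lambda>p. B\<rho> * \<bar>u0 p\<bar> + S (fst p) * \<bar>\<rho> (snd p)\<bar>)"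
    by (intro Bochner_Integration.integrable_add integrable_mult_right integrable_abs int_PP u0_int
        integrable_pair_mult[of S "\<lambda>t. \<bar>\<rho> t\<bar>"] S_int \<rho>i)
  show "(\<lambda>p. (u0 p - Gi (fst p) (snd p)) * \<rho> (snd p)) \<in> borel_measurable (lborel \<Otimes>\<^sub>M lborel)"
    by (simp add: lborel_prod)
  show "AE p in lborel \<Otimes>\<^sub>M lborel. norm ((u0 p - Gi (fst p) (snd p)) * \<rho> (snd p)) \<le> norm (B\<rho> * \<bar>u0 p\<bar> + S (fst p) * \<bar>\<rho> (snd p)\<bar>)"
    using AE_fst_pair[OF AE_good]
  proof eventually_elim
    case (elim p)
    have g: "\<bar>Gi (fst p) (snd p)\<bar> \<le> S (fst p)" using Gi_bnd[OF elim] .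
    have "\<bar>(u0 p - Gi (fst p) (snd p)) * \<rho> (snd p)\<bar> \<le> (\<bar>u0 p\<bar> + \<bar>Gi (fst p) (snd p)\<bar>) * \<bar>\<rho> (snd p)\<bar>"
      by (simp add: abs_mult mult_right_mono)
    also have "\<dots> = \<bar>u0 p\<bar> * \<bar>\<rho> (snd p)\<bar> + \<bar>Gi (fst p) (snd p)\<bar> * \<bar>\<rho> (snd p)\<bar>" by (simp add: algebra_simps)
    also have "\<dots> \<le> B\<rho> * \<bar>u0 p\<bar> + S (fst p) * \<bar>\<rho> (snd p)\<bar>"
    proof (rule add_mono)
      have "\<bar>u0 p\<bar> * \<bar>\<rho> (snd p)\<bar> \<le> \<bar>u0 p\<bar> * B\<rho>" by (rule mult_left_mono[OF \<rho>B]) simp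
      then show "\<bar>u0 p\<bar> * \<bar>\<rho> (snd p)\<bar> \<le> B\<rho> * \<bar>u0 p\<bar>" by (simp add: mult.commute)
      show "\<bar>Gi (fst p) (snd p)\<bar> * \<bar>\<rho> (snd p)\<bar> \<le> S (fst p) * \<bar>\<rho> (snd p)\<bar>"
        by (rule mult_right_mono[OF g]) simp
    qed
    finally show ?case using S_nonneg[of "fst p"] by simp
  qed
qed

lemma c_int: "integrable lborel c"
  unfolding c_def[abs_def] using lborel_pair.integrable_fst'[OF Finteg] by simp

definition "w p = indicator U p * (u0 p - v p)"

lemma w_meas[measurable]: "w \<in> borel_measurable borel"
  unfolding w_def[abs_def] using U_open by measurable

lemma Uv_int: "integrable lborel (\<lambda>p. indicator U p * v p)"
proof -
  have i01: "integrable lborel (indicator {0<..<1::real} :: real \<Rightarrow> real)"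
    by (auto simp: integrable_indicator_iff emeasure_lborel_Ioo)
  have "integrable (lborel \<Otimes>\<^sub>M lborel) (\<lambda>p. indicator U p * v p)"
  proof (rule Bochner_Integration.integrable_bound[where f="\<lambda>p. (\<bar>c (fst p)\<bar> + S (fst p)) * indicator {0<..<1::real} (snd p)"])
    show "integrable (lborel \<Otimes>\<^sub>M lborel) (\<lambda>p. (\<bar>c (fst p)\<bar> + S (fst p)) * indicator {0<..<1::real} (snd p))"
      by (intro integrable_pair_mult Bochner_Integration.integrable_add integrable_abs c_int S_int i01)
    show "(\<lambda>p. indicator U p * v p) \<in> borel_measurable (lborel \<Otimes>\<^sub>M lborel)"
      using U_open by (simp add: lborel_prod)
    show "AE p in lborel \<Otimes>\<^sub>M lborel. norm (indicator U p * v p) \<le> norm ((\<bar>c (fst p)\<bar> + S (fst p)) * indicator {0<..<1::real} (snd p))"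
      using AE_fst_pair[OF AE_good]
    proof eventually_elim
      case (elim p)
      show ?case
      proof (cases "p \<in> U")
        case True
        then have "snd p \<in> {0<..<1}" by (cases p) auto
        moreover have "\<bar>v p\<bar> \<le> \<bar>c (fst p)\<bar> + S (fst p)"
          using Gi_bnd[OF elim, of "snd p"] unfolding v_def by linarith
        ultimately show ?thesis using True S_nonneg[of "fst p"] by simp
      qed simp
    qed
  qed
  then show ?thesis by (simp add: lborel_prod)
qed

lemma w_int: "integrable lborel w"
proof -
  have "w = (\<lambda>p. u0 p - indicator U p * v p)"
    using u0z by (auto simp: w_def fun_eq_iff indicator_def)
  then show ?thesis using u0_int Uv_int by simp
qed

end


lemma int_bdd_mult:
  fixes f q :: "'x::euclidean_space \<Rightarrow> real"
  assumes f: "integrable lborel f" and q: "q \<in> borel_measurable borel" and K: "\<And>p. \<bar>q p\<bar> \<le> K"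
  shows "integrable lborel (\<lambda>p. f p * q p)"
proof (rule Bochner_Integration.integrable_bound[where f="\<lambda>p. K * \<bar>f p\<bar>"])
  show "integrable lborel (\<lambda>p. K * \<bar>f p\<bar>)" using f by auto
  show "(\<lambda>p. f p * q p) \<in> borel_measurable lborel" using f q by auto
  show "AE p in lborel. norm (f p * q p) \<le> norm (K * \<bar>f p\<bar>)"
  proof (intro AE_I2)
    fix p
    have "\<bar>f p\<bar> * \<bar>q p\<bar> \<le> \<bar>f p\<bar> * K" by (rule mult_left_mono[OF K]) simp
    moreover have "0 \<le> K" using K[of p] by linarith
    ultimately show "norm (f p * q p) \<le> norm (K * \<bar>f p\<bar>)" by (simp add: abs_mult mult.commute)
  qed
qed

context TS
begin

lemma Gi_x_meas[measurable]: "Gi x \<in> borel_measurable borel"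
proof -
  have "(\<lambda>z. Gi (fst (x, z)) (snd (x, z))) \<in> borel_measurable borel" by measurable
  then show ?thesis by simp
qed

lemma good_F_int: "good x \<Longrightarrow> integrable lborel (\<lambda>z. (u0 (x, z) - Gi x z) * \<rho> z)"
proof -
  assume gx: "good x"
  have a: "integrable lborel (\<lambda>z. u0 (x, z) * \<rho> z)"
    using gx unfolding good_def by (intro int_bdd_mult[OF _ \<rho>m \<rho>B]) auto
  have b: "integrable lborel (\<lambda>z. \<rho> z * Gi x z)"
    by (rule int_bdd_mult[OF \<rho>i Gi_x_meas Gi_bnd[OF gx]])
  have "integrable lborel (\<lambda>z. u0 (x, z) * \<rho> z - \<rho> z * Gi x z)" using a b by simp
  then show ?thesis by (simp add: algebra_simps)
qed

lemma B1:
  fixes P :: "'a \<Rightarrow> real"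
  assumes Pm[measurable]: "P \<in> borel_measurable borel" and PB: "\<And>x. \<bar>P x\<bar> \<le> 1"
  shows "(\<integral>p. w p * (P (fst p) * \<rho> (snd p)) \<partial>lborel) = 0"
proof -
  have qm: "(\<lambda>p. P (fst p) * \<rho> (snd p)) \<in> borel_measurable borel" by measurable
  have qB: "\<bar>P (fst p) * \<rho> (snd p)\<bar> \<le> B\<rho>" for p
  proof -
    have "\<bar>P (fst p)\<bar> * \<bar>\<rho> (snd p)\<bar> \<le> 1 * B\<rho>"
      by (rule mult_mono[OF PB \<rho>B]) auto
    then show ?thesis by (simp add: abs_mult)
  qed
  have I: "integrable lborel (\<lambda>p. w p * (P (fst p) * \<rho> (snd p)))"
    by (rule int_bdd_mult[OF w_int qm qB])
  have "(\<integral>p. w p * (P (fst p) * \<rho> (snd p)) \<partial>lborel)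
      = (\<integral>x. (\<integral>z. w (x, z) * (P x * \<rho> z) \<partial>lborel) \<partial>(lborel::'a measure))"
    using lborel_pair.integral_fst'[OF int_PP[OF I]] by (simp add: lborel_prod)
  also have "\<dots> = (\<integral>x. 0 \<partial>(lborel::'a measure))"
  proof (rule integral_cong_AE)
    show "(\<lambda>x. \<integral>z. w (x, z) * (P x * \<rho> z) \<partial>lborel) \<in> borel_measurable lborel"
      using meas_int_snd[of "\<lambda>p. w p * (P (fst p) * \<rho> (snd p))"] by simp
    show "(\<lambda>x. 0) \<in> borel_measurable lborel" by simp
    show "AE x in lborel. (\<integral>z. w (x, z) * (P x * \<rho> z) \<partial>lborel) = 0"
      using AE_good
    proof eventually_elim
      case (elim x)
      show ?case
      proof (cases "x \<in> G")
        case False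
        then show ?thesis by (simp add: w_def)
      next
        case True
        have gi: "integrable lborel (\<lambda>z. (u0 (x, z) - Gi x z) * \<rho> z)"
          by (rule good_F_int[OF elim])
        have "(\<integral>z. w (x, z) * (P x * \<rho> z) \<partial>lborel)
            = (\<integral>z. P x * ((u0 (x, z) - Gi x z) * \<rho> z - c x * \<rho> z) \<partial>lborel)"
        proof (rule Bochner_Integration.integral_cong[OF refl])
          fix z
          show "w (x, z) * (P x * \<rho> z) = P x * ((u0 (x, z) - Gi x z) * \<rho> z - c x * \<rho> z)"
          proof (cases "\<rho> z = 0")
            case False
            then have "z \<in> {0<..<1}" using \<rho>s by auto
            then show ?thesis using True by (simp add: w_def v_def algebra_simps)
          qed simp
        qed
        also have "\<dots> = P x * ((\<integral>z. (u0 (x, z) - Gi x z) * \<rho> z \<partial>lborel) - c x * (\<integral>z. \<rho> z \<partial>lborel))"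
          using gi \<rho>i by simp
        also have "\<dots> = 0" by (simp add: \<rho>1 c_def)
        finally show ?thesis .
      qed
    qed
  qed
  finally show ?thesis by simp
qed


lemma B2:
  fixes P :: "'a \<Rightarrow> real" and \<theta> \<theta>' :: "real \<Rightarrow> real"
  assumes Pm[measurable]: "P \<in> borel_measurable borel" and PB: "\<And>x. \<bar>P x\<bar> \<le> 1"
    and d: "\<And>z. (\<theta> has_real_derivative \<theta>' z) (at z)" and cont: "continuous_on UNIV \<theta>'"
    and t0: "\<And>z. z \<le> 0 \<Longrightarrow> \<theta> z = 0" and t1: "\<And>z. z \<ge> 1 \<Longrightarrow> \<theta> z = 0"
    and K: "\<And>z. \<bar>\<theta> z\<bar> \<le> K" and K': "\<And>z. \<bar>\<theta>' z\<bar> \<le> K"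
    and weak: "(\<integral>p. u0 p * (P (fst p) * \<theta>' (snd p)) \<partial>lborel) = - (\<integral>p. g0 p * (P (fst p) * \<theta> (snd p)) \<partial>lborel)"
  shows "(\<integral>p. w p * (P (fst p) * \<theta>' (snd p)) \<partial>lborel) = 0"
proof -
  have tc: "continuous_on UNIV \<theta>"
    using d DERIV_isCont continuous_at_imp_continuous_on by blast
  have tm[measurable]: "\<theta> \<in> borel_measurable borel" using tc by (simp add: borel_measurable_continuous_onI)
  have t'm[measurable]: "\<theta>' \<in> borel_measurable borel" using cont by (simp add: borel_measurable_continuous_onI)
  have bnd: "\<bar>P (fst p) * f (snd p)\<bar> \<le> K" if f: "\<And>z. \<bar>f z\<bar> \<le> K" for f :: "real \<Rightarrow> real" and p
  proof -
    have "\<bar>P (fst p)\<bar> * \<bar>f (snd p)\<bar> \<le> 1 * K" by (rule mult_mono[OF PB f]) auto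
    then show ?thesis by (simp add: abs_mult)
  qed
  have b1: "\<And>p. \<bar>P (fst p) * \<theta>' (snd p)\<bar> \<le> K" by (rule bnd[of \<theta>']) (rule K')
  have b2: "\<And>p. \<bar>P (fst p) * \<theta> (snd p)\<bar> \<le> K" by (rule bnd[of \<theta>]) (rule K)
  have q1m: "(\<lambda>p. P (fst p) * \<theta>' (snd p)) \<in> borel_measurable borel" by measurable
  have q2m: "(\<lambda>p. P (fst p) * \<theta> (snd p)) \<in> borel_measurable borel" by measurable
  have Iv: "integrable lborel (\<lambda>p. (indicator U p * v p) * (P (fst p) * \<theta>' (snd p)))"
    by (rule int_bdd_mult[OF Uv_int q1m b1])
  have Iu: "integrable lborel (\<lambda>p. u0 p * (P (fst p) * \<theta>' (snd p)))"
    by (rule int_bdd_mult[OF u0_int q1m b1])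
  have Ig: "integrable lborel (\<lambda>p. g0 p * (P (fst p) * \<theta> (snd p)))"
    by (rule int_bdd_mult[OF g0_int q2m b2])
  have i01: "integrable lborel (indicator {0<..<1::real} :: real \<Rightarrow> real)"
    by (auto simp: integrable_indicator_iff emeasure_lborel_Ioo)
  have eqv: "(\<integral>p. (indicator U p * v p) * (P (fst p) * \<theta>' (snd p)) \<partial>lborel)
      = - (\<integral>p. g0 p * (P (fst p) * \<theta> (snd p)) \<partial>lborel)"
  proof -
    have "(\<integral>p. (indicator U p * v p) * (P (fst p) * \<theta>' (snd p)) \<partial>lborel)
        = (\<integral>x. (\<integral>z. (indicator U (x, z) * v (x, z)) * (P x * \<theta>' z) \<partial>lborel) \<partial>(lborel::'a measure))"
      using lborel_pair.integral_fst'[OF int_PP[OF Iv]] by (simp add: lborel_prod)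
    also have "\<dots> = (\<integral>x. - (\<integral>z. g0 (x, z) * (P x * \<theta> z) \<partial>lborel) \<partial>(lborel::'a measure))"
    proof (rule integral_cong_AE)
      show "(\<lambda>x. \<integral>z. (indicator U (x, z) * v (x, z)) * (P x * \<theta>' z) \<partial>lborel) \<in> borel_measurable lborel"
        using meas_int_snd[of "\<lambda>p. (indicator U p * v p) * (P (fst p) * \<theta>' (snd p))"] by simp
      show "(\<lambda>x. - (\<integral>z. g0 (x, z) * (P x * \<theta> z) \<partial>lborel)) \<in> borel_measurable lborel"
        using meas_int_snd[of "\<lambda>p. g0 p * (P (fst p) * \<theta> (snd p))"] by simp
      show "AE x in lborel. (\<integral>z. (indicator U (x, z) * v (x, z)) * (P x * \<theta>' z) \<partial>lborel)
          = - (\<integral>z. g0 (x, z) * (P x * \<theta> z) \<partial>lborel)"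
        using AE_good
      proof eventually_elim
        case (elim x)
        show ?case
        proof (cases "x \<in> G")
          case False
          then show ?thesis using g0z by simp
        next
          case True
          have gx: "integrable lborel (\<lambda>s. g0 (x, s))" using elim by (simp add: good_def)
          have a1: "integrable lborel (\<lambda>z. indicator {0<..<1::real} z * \<theta>' z)"
            by (rule int_bdd_mult[OF i01 t'm K'])
          have Gim: "(\<lambda>z. \<theta>' z * Gi x z) \<in> borel_measurable borel" by measurable
          have GB: "\<bar>\<theta>' z * Gi x z\<bar> \<le> K * S x" for z
          proof -
            have "0 \<le> K" using K[of 0] by linarith
            then have "\<bar>\<theta>' z\<bar> * \<bar>Gi x z\<bar> \<le> K * S x"
              by (intro mult_mono[OF K' Gi_bnd[OF elim]]) auto
            then show ?thesis by (simp add: abs_mult)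
          qed
          have a2: "integrable lborel (\<lambda>z. indicator {0<..<1::real} z * (\<theta>' z * Gi x z))"
            by (rule int_bdd_mult[OF i01 Gim GB])
          have "(\<integral>z. (indicator U (x, z) * v (x, z)) * (P x * \<theta>' z) \<partial>lborel)
              = (\<integral>z. P x * (c x * (indicator {0<..<1::real} z * \<theta>' z) + indicator {0<..<1::real} z * (\<theta>' z * Gi x z)) \<partial>lborel)"
            by (rule Bochner_Integration.integral_cong[OF refl]) (use True in \<open>auto simp: v_def indicator_def algebra_simps\<close>)
          also have "\<dots> = P x * (c x * (\<integral>z. indicator {0<..<1::real} z * \<theta>' z \<partial>lborel)
              + (\<integral>z. indicator {0<..<1::real} z * (\<theta>' z * Gi x z) \<partial>lborel))"
            using a1 a2 by simp
          also have "(\<integral>z. indicator {0<..<1::real} z * \<theta>' z \<partial>lborel) = 0"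
            by (rule ibp_const[OF d cont]) (auto intro: t0 t1)
          also have "(\<integral>z. indicator {0<..<1::real} z * (\<theta>' z * Gi x z) \<partial>lborel)
              = (\<integral>z. indicator {0<..<1} z * (\<integral>s. indicator {0..<z} s * g0 (x, s) \<partial>lborel) * \<theta>' z \<partial>lborel)"
            by (simp add: Gi_def mult.commute mult.left_commute)
          also have "\<dots> = - (\<integral>s. g0 (x, s) * \<theta> s \<partial>lborel)"
            by (rule ibp[OF gx d cont t0 t1])
          also have "(\<integral>z. g0 (x, z) * (P x * \<theta> z) \<partial>lborel) = P x * (\<integral>s. g0 (x, s) * \<theta> s \<partial>lborel)"
            by (simp add: mult.left_commute)
          ultimately show ?thesis by simp
        qed
      qed
    qed
    also have "\<dots> = - (\<integral>x. (\<integral>z. g0 (x, z) * (P x * \<theta> z) \<partial>lborel) \<partial>(lborel::'a measure))"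
      by simp
    also have "\<dots> = - (\<integral>p. g0 p * (P (fst p) * \<theta> (snd p)) \<partial>lborel)"
      using lborel_pair.integral_fst'[OF int_PP[OF Ig]] by (simp add: lborel_prod)
    finally show ?thesis .
  qed
  have "(\<integral>p. w p * (P (fst p) * \<theta>' (snd p)) \<partial>lborel)
      = (\<integral>p. u0 p * (P (fst p) * \<theta>' (snd p)) - (indicator U p * v p) * (P (fst p) * \<theta>' (snd p)) \<partial>lborel)"
    by (rule Bochner_Integration.integral_cong[OF refl]) (use u0z in \<open>auto simp: w_def indicator_def algebra_simps\<close>)
  also have "\<dots> = (\<integral>p. u0 p * (P (fst p) * \<theta>' (snd p)) \<partial>lborel) - (\<integral>p. (indicator U p * v p) * (P (fst p) * \<theta>' (snd p)) \<partial>lborel)"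
    using Iu Iv by simp
  also have "\<dots> = 0" using weak eqv by simp
  finally show ?thesis .
qed

end


lemma bounded_supp01:
  fixes f :: "real \<Rightarrow> real"
  assumes c: "continuous_on UNIV f" and z: "\<And>t. t \<notin> {0..1} \<Longrightarrow> f t = 0"
  obtains K where "\<And>t. \<bar>f t\<bar> \<le> K"
proof -
  have "compact (f ` {0..1})" by (rule compact_continuous_image[OF continuous_on_subset[OF c]]) auto
  then obtain B where B: "\<forall>y\<in>f ` {0..1}. norm y \<le> B" using compact_imp_bounded bounded_iff by metis
  have "\<bar>f t\<bar> \<le> max B 0" for t
  proof (cases "t \<in> {0..1}")
    case True then show ?thesis using B by force
  next
    case False then show ?thesis using z by simp
  qed
  then show ?thesis by (rule that)
qed

locale TS2 = TS +
  assumes \<rho>g: "gen1 \<rho>" and \<rho>s2: "\<And>t. \<rho> t \<noteq> 0 \<Longrightarrow> 1/4 < t \<and> t < 3/4"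
    and weakH: "\<And>\<theta> \<theta>' n a b m M. cbox a b \<subseteq> G \<Longrightarrow> smooth1 \<theta> \<Longrightarrow> (\<And>z. (\<theta> has_real_derivative \<theta>' z) (at z))
      \<Longrightarrow> 0 < m \<Longrightarrow> M < 1 \<Longrightarrow> (\<And>z. z \<le> m \<Longrightarrow> \<theta> z = 0) \<Longrightarrow> (\<And>z. z \<ge> M \<Longrightarrow> \<theta> z = 0)
      \<Longrightarrow> (\<integral>p. u0 p * (Pb n a b (fst p) * \<theta>' (snd p)) \<partial>lborel) = - (\<integral>p. g0 p * (Pb n a b (fst p) * \<theta> (snd p)) \<partial>lborel)"
begin

lemma Pb_meas[measurable]: "Pb n a b \<in> borel_measurable borel"
  by (rule borel_measurable_continuous_onI[OF Pb_cont])

lemma Pb_abs: "\<bar>Pb n a b x\<bar> \<le> 1"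
  using Pb_bounds[of n a b x] by simp

lemma C1:
  assumes ab: "cbox a b \<subseteq> G" and \<alpha>: "0 < \<alpha>" and \<beta>: "\<beta> < 1" and \<alpha>\<beta>: "\<alpha> < \<beta>"
  shows "(\<integral>p. w p * (Pb n a b (fst p) * bmp n \<alpha> \<beta> (snd p)) \<partial>lborel) = 0"
proof -
  define \<gamma> where "\<gamma> = bmp n \<alpha> \<beta>"
  have g\<gamma>: "gen1 \<gamma>" unfolding \<gamma>_def by (rule gen1_bmp)
  have \<gamma>c: "continuous_on UNIV \<gamma>" by (rule gen1_cont[OF g\<gamma>])
  have \<gamma>s: "\<gamma> t \<noteq> 0 \<Longrightarrow> \<alpha> < t \<and> t < \<beta>" for t unfolding \<gamma>_def by (rule bmp_supp)
  have \<gamma>z: "t \<notin> {0..1} \<Longrightarrow> \<gamma> t = 0" for t using \<gamma>s[of t] \<alpha> \<beta> by force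
  have \<rho>c': "continuous_on UNIV \<rho>" by (rule gen1_cont[OF \<rho>g])
  have \<rho>z: "t \<notin> {0..1} \<Longrightarrow> \<rho> t = 0" for t using \<rho>s2[of t] by force
  define C where "C = (\<integral>t. \<gamma> t \<partial>lborel)"
  define h where "h = (\<lambda>t. \<gamma> t + (- C) * \<rho> t)"
  have gh: "gen1 h" unfolding h_def by (intro g1A g1M g1C g\<gamma> \<rho>g)
  have hc: "continuous_on UNIV h" by (rule gen1_cont[OF gh])
  define m where "m = min \<alpha> (1/4)"
  define M where "M = max \<beta> (3/4)"
  have m0: "0 < m" and M1: "M < 1" and mM: "m \<le> M" using \<alpha> \<beta> \<alpha>\<beta> by (auto simp: m_def M_def)
  have hs: "h t \<noteq> 0 \<Longrightarrow> m < t \<and> t < M" for t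
  proof -
    assume "h t \<noteq> 0"
    then have "\<gamma> t \<noteq> 0 \<or> \<rho> t \<noteq> 0" by (auto simp: h_def)
    then show ?thesis using \<gamma>s[of t] \<rho>s2[of t] by (auto simp: m_def M_def)
  qed
  have hz: "t \<notin> {0..1} \<Longrightarrow> h t = 0" for t using hs[of t] m0 M1 by force
  have int0: "integral {0..1} h = 0"
  proof -
    have a1: "integral {0..1} \<gamma> = C" unfolding C_def by (rule henstock_lebesgue01(2)[OF \<gamma>c \<gamma>z])
    have a2: "integral {0..1} \<rho> = 1" using henstock_lebesgue01(2)[OF \<rho>c' \<rho>z] \<rho>1 by simp
    have a3: "\<gamma> integrable_on {0..1}" "\<rho> integrable_on {0..1}"
      using integrable_continuous_real continuous_on_subset \<gamma>c \<rho>c' by blast+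
    have ci: "(\<lambda>t. C * \<rho> t) integrable_on {0..1}" using a3(2) by (rule integrable_on_mult_right)
    have "integral {0..1} h = integral {0..1} (\<lambda>t. \<gamma> t - C * \<rho> t)" by (simp add: h_def)
    also have "\<dots> = integral {0..1} \<gamma> - integral {0..1} (\<lambda>t. C * \<rho> t)"
      by (rule integral_diff[OF a3(1) ci])
    also have "integral {0..1} (\<lambda>t. C * \<rho> t) = C * integral {0..1} \<rho>"
      by (rule integral_mult_right)
    finally show ?thesis using a1 a2 by simp
  qed
  define \<theta> where "\<theta> = (\<lambda>z. integral {0..z} h)"
  have th: "smooth1 \<theta>" "\<And>z. (\<theta> has_real_derivative h z) (at z)"
    "\<And>z. z \<le> m \<Longrightarrow> \<theta> z = 0" "\<And>z. z \<ge> M \<Longrightarrow> \<theta> z = 0"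
    unfolding \<theta>_def using antider[OF gen1_smooth1[OF gh] hs m0 M1 mM int0] by auto
  have tc: "continuous_on UNIV \<theta>"
    using th(2) DERIV_isCont continuous_at_imp_continuous_on by blast
  have tz: "t \<notin> {0..1} \<Longrightarrow> \<theta> t = 0" for t using th(3)[of t] th(4)[of t] m0 M1 by force
  obtain K1 where K1: "\<And>t. \<bar>\<theta> t\<bar> \<le> K1" using bounded_supp01[OF tc tz] by blast
  obtain K2 where K2: "\<And>t. \<bar>h t\<bar> \<le> K2" using bounded_supp01[OF hc hz] by blast
  have w1: "(\<integral>p. w p * (Pb n a b (fst p) * h (snd p)) \<partial>lborel) = 0"
  proof (rule B2[where K="max K1 K2"])
    show "\<And>z. (\<theta> has_real_derivative h z) (at z)" by (rule th(2))
    show "\<And>z. z \<le> 0 \<Longrightarrow> \<theta> z = 0" using th(3) m0 by auto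
    show "\<And>z. z \<ge> 1 \<Longrightarrow> \<theta> z = 0" using th(4) M1 by auto
    show "\<And>z. \<bar>\<theta> z\<bar> \<le> max K1 K2" using K1 by (meson max.coboundedI1)
    show "\<And>z. \<bar>h z\<bar> \<le> max K1 K2" using K2 by (meson max.coboundedI2)
    show "(\<integral>p. u0 p * (Pb n a b (fst p) * h (snd p)) \<partial>lborel) = - (\<integral>p. g0 p * (Pb n a b (fst p) * \<theta> (snd p)) \<partial>lborel)"
      by (rule weakH[OF ab th(1) th(2) m0 M1 th(3) th(4)])
  qed (auto simp: Pb_abs hc)
  have w2: "(\<integral>p. w p * (Pb n a b (fst p) * \<rho> (snd p)) \<partial>lborel) = 0"
    by (rule B1) (auto simp: Pb_abs)
  have \<gamma>m: "\<gamma> \<in> borel_measurable borel" using \<gamma>c by (simp add: borel_measurable_continuous_onI)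
  have hm: "h \<in> borel_measurable borel" using hc by (simp add: borel_measurable_continuous_onI)
  have i1: "integrable lborel (\<lambda>p. w p * (Pb n a b (fst p) * h (snd p)))"
  proof (rule int_bdd_mult[OF w_int])
    show "(\<lambda>p. Pb n a b (fst p) * h (snd p)) \<in> borel_measurable borel" using hm by measurable
    fix p
    have k: "0 \<le> K2" using K2[of 0] by linarith
    have "\<bar>Pb n a b (fst p)\<bar> * \<bar>h (snd p)\<bar> \<le> 1 * K2" by (rule mult_mono[OF Pb_abs K2]) (simp_all add: k)
    then show "\<bar>Pb n a b (fst p) * h (snd p)\<bar> \<le> K2" by (simp add: abs_mult)
  qed
  have i2: "integrable lborel (\<lambda>p. w p * (Pb n a b (fst p) * \<rho> (snd p)))"
  proof (rule int_bdd_mult[OF w_int])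
    show "(\<lambda>p. Pb n a b (fst p) * \<rho> (snd p)) \<in> borel_measurable borel" by measurable
    fix p
    have k: "0 \<le> B\<rho>" using \<rho>B[of 0] by linarith
    have "\<bar>Pb n a b (fst p)\<bar> * \<bar>\<rho> (snd p)\<bar> \<le> 1 * B\<rho>" by (rule mult_mono[OF Pb_abs \<rho>B]) (simp_all add: k)
    then show "\<bar>Pb n a b (fst p) * \<rho> (snd p)\<bar> \<le> B\<rho>" by (simp add: abs_mult)
  qed
  have "(\<integral>p. w p * (Pb n a b (fst p) * \<gamma> (snd p)) \<partial>lborel)
      = (\<integral>p. w p * (Pb n a b (fst p) * h (snd p)) + C * (w p * (Pb n a b (fst p) * \<rho> (snd p))) \<partial>lborel)"
    by (rule Bochner_Integration.integral_cong[OF refl]) (simp add: h_def algebra_simps)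
  also have "\<dots> = 0" using i1 i2 w1 w2 by simp
  finally show ?thesis unfolding \<gamma>_def .
qed

end


context TS2
begin

lemma C2:
  assumes ab: "cbox a b \<subseteq> G" and \<alpha>: "0 < \<alpha>" and \<beta>: "\<beta> < 1" and \<alpha>\<beta>: "\<alpha> < \<beta>"
  shows "(\<integral>p. w p * (indicator (box a b) (fst p) * indicator {\<alpha><..<\<beta>} (snd p)) \<partial>lborel) = 0"
proof -
  have lim: "(\<lambda>n. \<integral>p. w p * (Pb n a b (fst p) * bmp n \<alpha> \<beta> (snd p)) \<partial>lborel)
      \<longlonglongrightarrow> (\<integral>p. w p * (indicator (box a b) (fst p) * indicator {\<alpha><..<\<beta>} (snd p)) \<partial>lborel)"
  proof (rule integral_dominated_convergence[where w="\<lambda>p. norm (w p)"])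
    show "(\<lambda>p. w p * (indicator (box a b) (fst p) * indicator {\<alpha><..<\<beta>} (snd p))) \<in> borel_measurable lborel"
      by measurable
    show "\<And>n. (\<lambda>p. w p * (Pb n a b (fst p) * bmp n \<alpha> \<beta> (snd p))) \<in> borel_measurable lborel"
    proof -
      fix n
      have "bmp n \<alpha> \<beta> \<in> borel_measurable borel"
        by (rule borel_measurable_continuous_onI[OF gen1_cont[OF gen1_bmp]])
      then show "(\<lambda>p. w p * (Pb n a b (fst p) * bmp n \<alpha> \<beta> (snd p))) \<in> borel_measurable lborel"
        by measurable
    qed
    show "integrable lborel (\<lambda>p. norm (w p))" using w_int by auto
    show "AE p in lborel. (\<lambda>n. w p * (Pb n a b (fst p) * bmp n \<alpha> \<beta> (snd p)))
        \<longlonglongrightarrow> w p * (indicator (box a b) (fst p) * indicator {\<alpha><..<\<beta>} (snd p))"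
      by (intro AE_I2 tendsto_mult tendsto_const Pb_lim bmp_lim)
    show "\<And>n. AE p in lborel. norm (w p * (Pb n a b (fst p) * bmp n \<alpha> \<beta> (snd p))) \<le> norm (w p)"
    proof (intro AE_I2)
      fix n p
      have "\<bar>Pb n a b (fst p)\<bar> * \<bar>bmp n \<alpha> \<beta> (snd p)\<bar> \<le> 1 * 1"
        by (rule mult_mono) (use Pb_abs bmp_bounds[of n \<alpha> \<beta> "snd p"] in auto)
      then have "\<bar>Pb n a b (fst p) * bmp n \<alpha> \<beta> (snd p)\<bar> \<le> 1" by (simp add: abs_mult)
      then have "\<bar>w p\<bar> * \<bar>Pb n a b (fst p) * bmp n \<alpha> \<beta> (snd p)\<bar> \<le> \<bar>w p\<bar> * 1"
        by (intro mult_left_mono) auto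
      then show "norm (w p * (Pb n a b (fst p) * bmp n \<alpha> \<beta> (snd p))) \<le> norm (w p)"
        by (simp add: abs_mult)
    qed
  qed
  have eq: "(\<lambda>n. \<integral>p. w p * (Pb n a b (fst p) * bmp n \<alpha> \<beta> (snd p)) \<partial>lborel) = (\<lambda>n. 0)"
    using C1[OF ab \<alpha> \<beta> \<alpha>\<beta>] by simp
  have z: "(\<lambda>n. \<integral>p. w p * (Pb n a b (fst p) * bmp n \<alpha> \<beta> (snd p)) \<partial>lborel) \<longlonglongrightarrow> 0"
    unfolding eq by (rule tendsto_const)
  from LIMSEQ_unique[OF lim z] show ?thesis .
qed

lemma C3: "AE p in lborel. p \<in> U \<longrightarrow> u0 p = v p"
proof -
  have "AE p in lborel. p \<in> U \<longrightarrow> w p = 0"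
  proof (rule fund_local[OF w_int U_open])
    fix A B :: "'a \<times> real"
    assume sub: "cbox A B \<subseteq> U"
    obtain a \<alpha> where A: "A = (a, \<alpha>)" by (cases A)
    obtain b \<beta> where B: "B = (b, \<beta>)" by (cases B)
    show "(\<integral>p. indicator (box A B) p * w p \<partial>lborel) = 0"
    proof (cases "box A B = {}")
      case True then show ?thesis by simp
    next
      case False
      have bx: "box A B = box a b \<times> {\<alpha><..<\<beta>}" unfolding A B box_Pair_eq by simp
      then have ne1: "box a b \<noteq> {}" and ab: "\<alpha> < \<beta>" using False by auto
      have cb: "cbox A B = cbox a b \<times> {\<alpha>..\<beta>}" unfolding A B cbox_Pair_eq by simp
      obtain x0 where x0: "x0 \<in> cbox a b" using ne1 box_subset_cbox by blast
      have G1: "cbox a b \<subseteq> G"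
      proof
        fix x assume "x \<in> cbox a b"
        then have "(x, \<alpha>) \<in> cbox A B" using ab unfolding cb by auto
        then show "x \<in> G" using sub by auto
      qed
      have "(x0, \<alpha>) \<in> cbox A B" "(x0, \<beta>) \<in> cbox A B" using x0 ab unfolding cb by auto
      then have "(x0, \<alpha>) \<in> U" "(x0, \<beta>) \<in> U" using sub by blast+
      then have a0: "0 < \<alpha>" and b1: "\<beta> < 1" by auto
      have "(\<integral>p. indicator (box A B) p * w p \<partial>lborel)
          = (\<integral>p. w p * (indicator (box a b) (fst p) * indicator {\<alpha><..<\<beta>} (snd p)) \<partial>lborel)"
        by (rule Bochner_Integration.integral_cong[OF refl]) (auto simp: bx indicator_def)
      also have "\<dots> = 0" by (rule C2[OF G1 a0 b1 ab])
      finally show ?thesis .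
    qed
  qed
  then show ?thesis
    by eventually_elim (auto simp: w_def)
qed

end


context TS2
begin

lemma v_line_cont: "good x \<Longrightarrow> continuous_on {0..<1} (\<lambda>z. v (x, z))"
proof -
  assume gx: "good x"
  have "continuous_on UNIV (\<lambda>z. c x + Gi x z)"
    by (intro continuous_on_add continuous_on_const Gi_cnt[OF gx])
  then show ?thesis by (auto simp: v_def intro: continuous_on_subset)
qed

lemma v_at0: "v (x, 0) = c x"
  by (simp add: v_def Gi_def)

lemma E2: "AE x in lborel. AE z in lborel. (x, z) \<in> U \<longrightarrow> u0 (x, z) = v (x, z)"
proof -
  have "AE p in (lborel::'a measure) \<Otimes>\<^sub>M (lborel::real measure). p \<in> U \<longrightarrow> u0 p = v p"
    unfolding lborel_prod by (rule C3)
  from lborel_pair.AE_pair[OF this] show ?thesis by simp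
qed

lemma sq_sum_le: "((p::real) + q)\<^sup>2 \<le> 2 * (p\<^sup>2 + q\<^sup>2)"
proof -
  have "0 \<le> (p - q)\<^sup>2" by simp
  moreover have "(p + q)\<^sup>2 = 2 * (p\<^sup>2 + q\<^sup>2) - (p - q)\<^sup>2" by (simp add: power2_eq_square algebra_simps)
  ultimately show ?thesis by linarith
qed

definition "A x = (\<integral>z. (u0 (x, z))\<^sup>2 \<partial>lborel)"
definition "Bg x = (\<integral>z. (g0 (x, z))\<^sup>2 \<partial>lborel)"

lemma A_int: "integrable lborel A"
  unfolding A_def[abs_def] using lborel_pair.integrable_fst'[OF int_PP[OF u02]] by simp
lemma Bg_int: "integrable lborel Bg"
  unfolding Bg_def[abs_def] using lborel_pair.integrable_fst'[OF int_PP[OF g02]] by simp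
lemma A_tot: "(\<integral>x. A x \<partial>lborel) = (\<integral>p. (u0 p)\<^sup>2 \<partial>lborel)"
  unfolding A_def using lborel_pair.integral_fst'[OF int_PP[OF u02]] by (simp add: lborel_prod)
lemma Bg_tot: "(\<integral>x. Bg x \<partial>lborel) = (\<integral>p. (g0 p)\<^sup>2 \<partial>lborel)"
  unfolding Bg_def using lborel_pair.integral_fst'[OF int_PP[OF g02]] by (simp add: lborel_prod)
lemma A_nonneg: "0 \<le> A x" unfolding A_def by simp
lemma Bg_nonneg: "0 \<le> Bg x" unfolding Bg_def by simp

lemma c_out: "x \<notin> G \<Longrightarrow> c x = 0"
proof -
  assume x: "x \<notin> G"
  have "Gi x z = 0" for z unfolding Gi_def using g0z x by simp
  then show ?thesis unfolding c_def using u0z x by simp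
qed

lemma A_out: "x \<notin> G \<Longrightarrow> A x = 0"
  unfolding A_def using u0z by simp

lemma E3:
  assumes gx: "good x" and xG: "x \<in> G"
    and ae: "AE z in lborel. (x, z) \<in> U \<longrightarrow> u0 (x, z) = v (x, z)"
  shows "(c x)\<^sup>2 \<le> 2 * (A x + Bg x)" "A x \<le> 2 * ((c x)\<^sup>2 + Bg x)"
proof -
  have ui: "integrable lborel (\<lambda>z. u0 (x, z))" and gi: "integrable lborel (\<lambda>z. g0 (x, z))"
    and u2: "integrable lborel (\<lambda>z. (u0 (x, z))\<^sup>2)" and g2: "integrable lborel (\<lambda>z. (g0 (x, z))\<^sup>2)"
    using gx by (auto simp: good_def)
  have uz: "z \<notin> {0<..<1} \<Longrightarrow> u0 (x, z) = 0" for z using u0z by auto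
  have gz: "z \<notin> {0<..<1} \<Longrightarrow> g0 (x, z) = 0" for z using g0z by auto
  define a where "a = (\<integral>z. \<bar>u0 (x, z)\<bar> \<partial>lborel)"
  define s where "s = S x"
  have s_def': "s = (\<integral>z. \<bar>g0 (x, z)\<bar> \<partial>lborel)" by (simp add: s_def S_def)
  have a2: "a\<^sup>2 \<le> A x" unfolding a_def A_def by (rule mtrick[OF ui u2 uz])
  have s2: "s\<^sup>2 \<le> Bg x" unfolding s_def' Bg_def by (rule mtrick[OF gi g2 gz])
  have a0: "0 \<le> a" unfolding a_def by simp
  have s0: "0 \<le> s" unfolding s_def by (rule S_nonneg)
  have Gb: "\<bar>Gi x z\<bar> \<le> s" for z unfolding s_def by (rule Gi_bnd[OF gx])
  have i01: "integrable lborel (indicator {0<..<1::real} :: real \<Rightarrow> real)"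
    by (auto simp: integrable_indicator_iff emeasure_lborel_Ioo)
  have m01: "(\<integral>z. indicator {0<..<1::real} z * k \<partial>lborel) = k" for k :: real
    by (simp add: measure_lborel_Ioo)
  have ae2: "AE z in lborel. z \<in> {0<..<1} \<longrightarrow> u0 (x, z) = v (x, z)"
    using ae by eventually_elim (use xG in auto)
  have c1: "\<bar>c x\<bar> \<le> a + s"
  proof -
    have "\<bar>c x\<bar> = (\<integral>z. indicator {0<..<1::real} z * \<bar>c x\<bar> \<partial>lborel)" by (simp add: m01)
    also have "\<dots> \<le> (\<integral>z. \<bar>u0 (x, z)\<bar> + indicator {0<..<1::real} z * s \<partial>lborel)"
    proof (rule integral_mono_AE)
      show "integrable lborel (\<lambda>z. indicator {0<..<1::real} z * \<bar>c x\<bar>)" using i01 by simp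
      show "integrable lborel (\<lambda>z. \<bar>u0 (x, z)\<bar> + indicator {0<..<1::real} z * s)" using ui i01 by simp
      show "AE z in lborel. indicator {0<..<1::real} z * \<bar>c x\<bar> \<le> \<bar>u0 (x, z)\<bar> + indicator {0<..<1::real} z * s"
        using ae2
      proof eventually_elim
        case (elim z)
        show ?case
        proof (cases "z \<in> {0<..<1}")
          case True
          then have "u0 (x, z) = c x + Gi x z" using elim by (simp add: v_def)
          then have "\<bar>c x\<bar> \<le> \<bar>u0 (x, z)\<bar> + \<bar>Gi x z\<bar>" by linarith
          then show ?thesis using True Gb[of z] by simp
        qed simp
      qed
    qed
    also have "\<dots> = a + s" using ui i01 by (simp add: a_def m01)
    finally show ?thesis .
  qed
  show "(c x)\<^sup>2 \<le> 2 * (A x + Bg x)"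
  proof -
    have "(c x)\<^sup>2 = \<bar>c x\<bar>\<^sup>2" by simp
    also have "\<dots> \<le> (a + s)\<^sup>2" by (rule power_mono[OF c1]) simp
    also have "\<dots> \<le> 2 * (a\<^sup>2 + s\<^sup>2)" by (rule sq_sum_le)
    also have "\<dots> \<le> 2 * (A x + Bg x)" using a2 s2 by simp
    finally show ?thesis .
  qed
  show "A x \<le> 2 * ((c x)\<^sup>2 + Bg x)"
  proof -
    have "A x \<le> (\<integral>z. indicator {0<..<1::real} z * (2 * ((c x)\<^sup>2 + s\<^sup>2)) \<partial>lborel)"
      unfolding A_def
    proof (rule integral_mono_AE[OF u2])
      show "integrable lborel (\<lambda>z. indicator {0<..<1::real} z * (2 * ((c x)\<^sup>2 + s\<^sup>2)))" using i01 by simp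
      show "AE z in lborel. (u0 (x, z))\<^sup>2 \<le> indicator {0<..<1::real} z * (2 * ((c x)\<^sup>2 + s\<^sup>2))"
        using ae2
      proof eventually_elim
        case (elim z)
        show ?case
        proof (cases "z \<in> {0<..<1}")
          case True
          then have e: "u0 (x, z) = c x + Gi x z" using elim by (simp add: v_def)
          have g2: "(Gi x z)\<^sup>2 \<le> s\<^sup>2" using power_mono[OF Gb[of z] abs_ge_zero, of 2] by simp
          have "(c x + Gi x z)\<^sup>2 \<le> 2 * ((c x)\<^sup>2 + (Gi x z)\<^sup>2)"
            by (rule sq_sum_le)
          then show ?thesis using True e g2 by simp
        next
          case False then show ?thesis using uz by simp
        qed
      qed
    qed
    also have "\<dots> = 2 * ((c x)\<^sup>2 + s\<^sup>2)" by (rule m01)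
    also have "\<dots> \<le> 2 * ((c x)\<^sup>2 + Bg x)" using s2 by simp
    finally show ?thesis .
  qed
qed

end


context TS2
begin

lemma AE_E3: "AE x in lborel. (c x)\<^sup>2 \<le> 2 * (A x + Bg x) \<and> A x \<le> 2 * ((c x)\<^sup>2 + Bg x)"
  using AE_good E2
proof eventually_elim
  case (elim x)
  show ?case
  proof (cases "x \<in> G")
    case True
    show ?thesis using E3[OF elim(1) True elim(2)] by simp
  next
    case False
    then show ?thesis using c_out A_out Bg_nonneg[of x] by simp
  qed
qed

lemma c2_int: "integrable lborel (\<lambda>x. (c x)\<^sup>2)"
proof (rule Bochner_Integration.integrable_bound[where f="\<lambda>x. 2 * (A x + Bg x)"])
  show "integrable lborel (\<lambda>x. 2 * (A x + Bg x))" using A_int Bg_int by simp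
  show "(\<lambda>x. (c x)\<^sup>2) \<in> borel_measurable lborel" by simp
  show "AE x in lborel. norm ((c x)\<^sup>2) \<le> norm (2 * (A x + Bg x))"
    using AE_E3 by eventually_elim (use A_nonneg Bg_nonneg in auto)
qed

lemma E4a: "(\<integral>x. (c x)\<^sup>2 \<partial>lborel) \<le> 2 * ((\<integral>p. (u0 p)\<^sup>2 \<partial>lborel) + (\<integral>p. (g0 p)\<^sup>2 \<partial>lborel))"
proof -
  have "(\<integral>x. (c x)\<^sup>2 \<partial>lborel) \<le> (\<integral>x. 2 * (A x + Bg x) \<partial>lborel)"
    by (rule integral_mono_AE[OF c2_int]) (use A_int Bg_int AE_E3 in \<open>auto elim: eventually_mono\<close>)
  also have "\<dots> = 2 * ((\<integral>x. A x \<partial>lborel) + (\<integral>x. Bg x \<partial>lborel))"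
    using A_int Bg_int by simp
  finally show ?thesis by (simp add: A_tot Bg_tot)
qed

lemma E4b: "(\<integral>p. (u0 p)\<^sup>2 \<partial>lborel) \<le> 2 * ((\<integral>x. (c x)\<^sup>2 \<partial>lborel) + (\<integral>p. (g0 p)\<^sup>2 \<partial>lborel))"
proof -
  have "(\<integral>x. A x \<partial>lborel) \<le> (\<integral>x. 2 * ((c x)\<^sup>2 + Bg x) \<partial>lborel)"
    by (rule integral_mono_AE[OF A_int]) (use c2_int Bg_int AE_E3 in \<open>auto elim: eventually_mono\<close>)
  also have "\<dots> = 2 * ((\<integral>x. (c x)\<^sup>2 \<partial>lborel) + (\<integral>x. Bg x \<partial>lborel))"
    using c2_int Bg_int by simp
  finally show ?thesis by (simp add: A_tot Bg_tot)
qed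

end


lemma conv_L:
  fixes A :: "'b::euclidean_space set" and h h0 :: "'b \<Rightarrow> real"
  assumes hm: "(\<lambda>x. indicator A x * h x) \<in> borel_measurable lebesgue"
    and h0m: "h0 \<in> borel_measurable borel"
    and ae: "AE x in lborel. indicator A x * h x = h0 x"
  shows "set_integrable lebesgue A h \<longleftrightarrow> integrable lborel h0"
    and "set_lebesgue_integral lebesgue A h = (\<integral>x. h0 x \<partial>lborel)"
proof -
  have h0l: "h0 \<in> borel_measurable lebesgue" using h0m by (intro measurable_completion) simp
  have ae': "AE x in lebesgue. indicator A x * h x = h0 x" using ae by (rule AE_completion)
  have "set_integrable lebesgue A h \<longleftrightarrow> integrable lebesgue (\<lambda>x. indicator A x * h x)"
    by (simp add: set_integrable_def)
  also have "\<dots> \<longleftrightarrow> integrable lebesgue h0" by (rule integrable_cong_AE[OF hm h0l ae'])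
  also have "\<dots> \<longleftrightarrow> integrable lborel h0" by (rule integrable_completion) (use h0m in simp)
  finally show "set_integrable lebesgue A h \<longleftrightarrow> integrable lborel h0" .
  have "set_lebesgue_integral lebesgue A h = integral\<^sup>L lebesgue (\<lambda>x. indicator A x * h x)"
    by (simp add: set_lebesgue_integral_def)
  also have "\<dots> = integral\<^sup>L lebesgue h0" by (rule integral_cong_AE[OF hm h0l ae'])
  also have "\<dots> = (\<integral>x. h0 x \<partial>lborel)" by (rule integral_completion) (use h0m in simp)
  finally show "set_lebesgue_integral lebesgue A h = (\<integral>x. h0 x \<partial>lborel)" .
qed

lemma smooth1_deriv_cont:
  assumes s: "smooth1 \<theta>" and d: "\<And>z. (\<theta> has_real_derivative \<theta>' z) (at z)"
  shows "continuous_on UNIV \<theta>'"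
proof -
  obtain D where D: "D 0 = \<theta>" "\<And>n x. (D n has_real_derivative D (Suc n) x) (at x)"
    using s unfolding smooth1_def by blast
  have e: "\<theta>' z = D 1 z" for z using DERIV_unique[OF d[of z]] D(2)[of 0 z] D(1) by simp
  have "isCont (D 1) z" for z using DERIV_isCont[OF D(2)[of 1 z]] by simp
  then have "continuous_on UNIV (D 1)" by (simp add: continuous_at_imp_continuous_on)
  moreover have "\<theta>' = D 1" using e by (simp add: fun_eq_iff)
  ultimately show ?thesis by simp
qed

definition "\<rho>0 = bmp 0 (1/4) (3/4)"

lemma \<rho>0_props: "continuous_on UNIV \<rho>0" "\<And>t. \<rho>0 t \<noteq> 0 \<Longrightarrow> 1/4 < t \<and> t < 3/4"
  "\<And>t. 0 \<le> \<rho>0 t" "\<And>t. \<rho>0 t \<le> 1" "gen1 \<rho>0"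
  unfolding \<rho>0_def
  subgoal by (rule gen1_cont[OF gen1_bmp])
  subgoal for t using bmp_supp[of 0 "1/4" "3/4" t] by simp
  subgoal for t by (rule bmp_bounds)
  subgoal for t by (rule bmp_bounds)
  subgoal by (rule gen1_bmp)
  done

lemma \<rho>0_int: "integrable lborel \<rho>0" "(\<integral>t. \<rho>0 t \<partial>lborel) > 0"
proof -
  have z: "t \<notin> {0..1} \<Longrightarrow> \<rho>0 t = 0" for t using \<rho>0_props(2)[of t] by force
  show "integrable lborel \<rho>0" by (rule henstock_lebesgue01(1)[OF \<rho>0_props(1) z])
  have eq: "integral {0..1} \<rho>0 = (\<integral>t. \<rho>0 t \<partial>lborel)" by (rule henstock_lebesgue01(2)[OF \<rho>0_props(1) z])
  have ge: "0 \<le> integral {0..1} \<rho>0"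
  proof (rule integral_nonneg)
    show "\<rho>0 integrable_on {0..1}"
      by (rule integrable_continuous_real[OF continuous_on_subset[OF \<rho>0_props(1)]]) simp
  qed (rule \<rho>0_props(3))
  have "\<rho>0 (1/2) \<noteq> 0" unfolding \<rho>0_def bmp_def F_def by simp
  then have ne: "\<not> (\<forall>x\<in>cbox 0 1. \<rho>0 x = 0)" by force
  have "integral (cbox 0 1) \<rho>0 \<noteq> (0::real)"
  proof
    assume "integral (cbox 0 1) \<rho>0 = 0"
    then have "\<forall>x\<in>cbox 0 (1::real). \<rho>0 x = 0"
      using integral_cbox_eq_0_iff[of 0 1 \<rho>0] \<rho>0_props(1,3) continuous_on_subset by fastforce
    with ne show False by blast
  qed
  then show "(\<integral>t. \<rho>0 t \<partial>lborel) > 0" using ge eq by simp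
qed


lemma sqrt_ineq:
  fixes X Y Z :: real
  assumes "Z \<le> 2 * (X + Y)" "0 \<le> X" "0 \<le> Y"
  shows "sqrt Z \<le> sqrt 2 * (sqrt X + sqrt Y)"
proof -
  have "sqrt Z \<le> sqrt (2 * (X + Y))" using assms(1) by (rule real_sqrt_le_mono)
  also have "\<dots> = sqrt 2 * sqrt (X + Y)" by (simp only: real_sqrt_mult)
  also have "\<dots> \<le> sqrt 2 * (sqrt X + sqrt Y)"
    by (rule mult_left_mono[OF sqrt_add_le_add_sqrt[OF assms(2,3)]]) simp
  finally show ?thesis .
qed

theorem lemma4:
  fixes G :: "'a::euclidean_space set" and u g :: "'a \<times> real \<Rightarrow> real"
  assumes "bounded G" and "lipschitz_domain G"
    and "H_dz G u g"
  shows "(\<exists>t. is_trace G u t)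
     \<and> (\<forall>t1 t2. is_trace G u t1 \<longrightarrow> is_trace G u t2 \<longrightarrow> (AE x in lebesgue. x \<in> G \<longrightarrow> t1 x = t2 x))
     \<and> (\<forall>t. is_trace G u t \<longrightarrow> in_L2 G t
          \<and> L2_norm G t \<le> sqrt 2 * (L2_norm (Omega2 G) u + L2_norm (Omega2 G) g)
          \<and> L2_norm (Omega2 G) u \<le> sqrt 2 * (L2_norm (Omega2 G) g + L2_norm G t))"
proof -
  have Gopen: "open G" using assms(2) by (simp add: lipschitz_domain_def)
  define Om where "Om = G \<times> {0<..<1::real}"
  have OmO: "Omega2 G = Om" by (simp add: Omega2_def Om_def)
  have Omb[measurable]: "Om \<in> sets borel" unfolding Om_def using Gopen by (intro borel_open open_Times) auto
  have iu: "in_L2 Om u" and ig: "in_L2 Om g" and wk: "weak_dz Om u g"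
    using assms(3) by (auto simp: H_dz_def OmO)
  have borel_rep: "\<exists>f0. f0 \<in> borel_measurable borel \<and> (\<forall>p. p \<notin> Om \<longrightarrow> f0 p = 0)
      \<and> (AE p in lborel. indicator Om p * f p = f0 p)
      \<and> integrable lborel (\<lambda>p. (f0 p)\<^sup>2) \<and> L2_norm Om f = sqrt (\<integral>p. (f0 p)\<^sup>2 \<partial>lborel)"
    if fL: "in_L2 Om f" for f :: "'a \<times> real \<Rightarrow> real"
  proof -
    have fm: "(\<lambda>p. indicator Om p * f p) \<in> borel_measurable lebesgue"
      and sf: "set_integrable lebesgue Om (\<lambda>p. (f p)\<^sup>2)" using fL by (auto simp: in_L2_def)
    obtain fb where fb: "fb \<in> borel_measurable lborel" "AE p in lborel. indicator Om p * f p = fb p"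
      using completion_ex_borel_measurable_real[OF fm] by blast
    define f0 where "f0 p = indicator Om p * fb p" for p
    have f0m: "f0 \<in> borel_measurable borel" unfolding f0_def[abs_def] using fb(1) by measurable
    have f0z: "\<forall>p. p \<notin> Om \<longrightarrow> f0 p = 0" by (simp add: f0_def)
    have f0ae: "AE p in lborel. indicator Om p * f p = f0 p"
      using fb(2) by eventually_elim (auto simp: f0_def indicator_def)
    have hm: "(\<lambda>p. indicator Om p * (f p)\<^sup>2) \<in> borel_measurable lebesgue"
    proof -
      have "(\<lambda>p. indicator Om p * (f p)\<^sup>2) = (\<lambda>p. (indicator Om p * f p)\<^sup>2)"
        by (auto simp: fun_eq_iff indicator_def)
      then show ?thesis using fm by simp
    qed
    have h0m: "(\<lambda>p. (f0 p)\<^sup>2) \<in> borel_measurable borel" using f0m by measurable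
    have ae2: "AE p in lborel. indicator Om p * (f p)\<^sup>2 = (f0 p)\<^sup>2"
      using f0ae by eventually_elim (auto simp: indicator_def)
    have "integrable lborel (\<lambda>p. (f0 p)\<^sup>2)" using conv_L(1)[OF hm h0m ae2] sf by simp
    moreover have "L2_norm Om f = sqrt (\<integral>p. (f0 p)\<^sup>2 \<partial>lborel)"
      unfolding L2_norm_def using conv_L(2)[OF hm h0m ae2] by simp
    ultimately show ?thesis using f0m f0z f0ae by blast
  qed
  obtain u0 where u0m[measurable]: "u0 \<in> borel_measurable borel" and u0z: "\<And>p. p \<notin> Om \<Longrightarrow> u0 p = 0"
    and u0ae: "AE p in lborel. indicator Om p * u p = u0 p" and u02: "integrable lborel (\<lambda>p. (u0 p)\<^sup>2)"
    and Lu: "L2_norm Om u = sqrt (\<integral>p. (u0 p)\<^sup>2 \<partial>lborel)"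
    using borel_rep[OF iu] by blast
  obtain g0 where g0m[measurable]: "g0 \<in> borel_measurable borel" and g0z: "\<And>p. p \<notin> Om \<Longrightarrow> g0 p = 0"
    and g0ae: "AE p in lborel. indicator Om p * g p = g0 p" and g02: "integrable lborel (\<lambda>p. (g0 p)\<^sup>2)"
    and Lg: "L2_norm Om g = sqrt (\<integral>p. (g0 p)\<^sup>2 \<partial>lborel)"
    using borel_rep[OF ig] by blast
  define I where "I = (\<integral>t. \<rho>0 t \<partial>lborel)"
  have I0: "I > 0" unfolding I_def by (rule \<rho>0_int(2))
  define \<rho> where "\<rho> t = \<rho>0 t * (1 / I)" for t
  have \<rho>g: "gen1 \<rho>" unfolding \<rho>_def[abs_def] by (intro g1M g1C \<rho>0_props(5))
  have \<rho>c: "continuous_on UNIV \<rho>" by (rule gen1_cont[OF \<rho>g])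
  have \<rho>B: "\<bar>\<rho> t\<bar> \<le> 1 / I" for t
    using \<rho>0_props(3,4)[of t] I0 by (simp add: \<rho>_def divide_right_mono)
  have \<rho>s2: "\<rho> t \<noteq> 0 \<Longrightarrow> 1/4 < t \<and> t < 3/4" for t using \<rho>0_props(2)[of t] by (simp add: \<rho>_def)
  have \<rho>s: "\<rho> t \<noteq> 0 \<Longrightarrow> 0 < t \<and> t < 1" for t using \<rho>s2[of t] by simp
  have \<rho>i: "integrable lborel \<rho>" unfolding \<rho>_def[abs_def] using \<rho>0_int(1) by simp
  have \<rho>1: "(\<integral>t. \<rho> t \<partial>lborel) = 1" unfolding \<rho>_def using I0 by (simp add: I_def)
  have weakH: "(\<integral>p. u0 p * (Pb n a b (fst p) * \<theta>' (snd p)) \<partial>lborel) = - (\<integral>p. g0 p * (Pb n a b (fst p) * \<theta> (snd p)) \<partial>lborel)"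
    if sub: "cbox a b \<subseteq> G" and th: "smooth1 \<theta>" and d: "\<And>z. (\<theta> has_real_derivative \<theta>' z) (at z)"
      and m: "0 < m" and M: "M < 1" and lo: "\<And>z. z \<le> m \<Longrightarrow> \<theta> z = 0" and hi: "\<And>z. z \<ge> M \<Longrightarrow> \<theta> z = 0"
    for \<theta> \<theta>' :: "real \<Rightarrow> real" and n a b m M
  proof -
    have tf: "test_fun Om (\<lambda>p. Pb n a b (fst p) * \<theta> (snd p))"
      and fd: "\<And>p. frechet_derivative (\<lambda>p. Pb n a b (fst p) * \<theta> (snd p)) (at p) (0, 1) = Pb n a b (fst p) * \<theta>' (snd p)"
      using test_phi[OF th d lo hi m M sub, of n] by (simp_all add: Om_def)
    have w: "(LINT p:Om|lebesgue. u p * (Pb n a b (fst p) * \<theta>' (snd p)))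
        = - (LINT p:Om|lebesgue. g p * (Pb n a b (fst p) * \<theta> (snd p)))"
      using wk[unfolded weak_dz_def, rule_format, OF tf] unfolding fd .
    have t'c: "continuous_on UNIV \<theta>'" by (rule smooth1_deriv_cont[OF th d])
    have tc: "continuous_on UNIV \<theta>" using smooth1_cont[OF th] .
    have t'm[measurable]: "\<theta>' \<in> borel_measurable borel" using t'c by (rule borel_measurable_continuous_onI)
    have tm[measurable]: "\<theta> \<in> borel_measurable borel" using tc by (rule borel_measurable_continuous_onI)
    have Pm[measurable]: "Pb n a b \<in> borel_measurable borel" by (rule borel_measurable_continuous_onI[OF Pb_cont])
    have fml: "(\<lambda>p. indicator Om p * f p) \<in> borel_measurable lebesgue" if "in_L2 Om f" for f
      using that by (simp add: in_L2_def)
    have e1: "(LINT p:Om|lebesgue. u p * (Pb n a b (fst p) * \<theta>' (snd p))) = (\<integral>p. u0 p * (Pb n a b (fst p) * \<theta>' (snd p)) \<partial>lborel)"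
    proof (rule conv_L(2))
      have "(\<lambda>p. indicator Om p * (u p * (Pb n a b (fst p) * \<theta>' (snd p)))) = (\<lambda>p. (indicator Om p * u p) * (Pb n a b (fst p) * \<theta>' (snd p)))"
        by (simp add: fun_eq_iff mult.assoc)
      moreover have "(\<lambda>p. Pb n a b (fst p) * \<theta>' (snd p)) \<in> borel_measurable lebesgue"
        by (rule measurable_completion) measurable
      ultimately show "(\<lambda>p. indicator Om p * (u p * (Pb n a b (fst p) * \<theta>' (snd p)))) \<in> borel_measurable lebesgue"
        using fml[OF iu] by simp
      show "(\<lambda>p. u0 p * (Pb n a b (fst p) * \<theta>' (snd p))) \<in> borel_measurable borel" by measurable
      show "AE p in lborel. indicator Om p * (u p * (Pb n a b (fst p) * \<theta>' (snd p))) = u0 p * (Pb n a b (fst p) * \<theta>' (snd p))"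
        using u0ae by eventually_elim (simp add: mult.assoc[symmetric])
    qed
    have e2: "(LINT p:Om|lebesgue. g p * (Pb n a b (fst p) * \<theta> (snd p))) = (\<integral>p. g0 p * (Pb n a b (fst p) * \<theta> (snd p)) \<partial>lborel)"
    proof (rule conv_L(2))
      have "(\<lambda>p. indicator Om p * (g p * (Pb n a b (fst p) * \<theta> (snd p)))) = (\<lambda>p. (indicator Om p * g p) * (Pb n a b (fst p) * \<theta> (snd p)))"
        by (simp add: fun_eq_iff mult.assoc)
      moreover have "(\<lambda>p. Pb n a b (fst p) * \<theta> (snd p)) \<in> borel_measurable lebesgue"
        by (rule measurable_completion) measurable
      ultimately show "(\<lambda>p. indicator Om p * (g p * (Pb n a b (fst p) * \<theta> (snd p)))) \<in> borel_measurable lebesgue"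
        using fml[OF ig] by simp
      show "(\<lambda>p. g0 p * (Pb n a b (fst p) * \<theta> (snd p))) \<in> borel_measurable borel" by measurable
      show "AE p in lborel. indicator Om p * (g p * (Pb n a b (fst p) * \<theta> (snd p))) = g0 p * (Pb n a b (fst p) * \<theta> (snd p))"
        using g0ae by eventually_elim (simp add: mult.assoc[symmetric])
    qed
    show ?thesis using w e1 e2 by simp
  qed
  have TS: "TS2 G u0 g0 \<rho> (1 / I)"
  proof (intro TS2.intro TS.intro TS2_axioms.intro)
  qed (use Gopen assms(1) u0m g0m u0z g0z u02 g02 \<rho>c \<rho>B \<rho>s \<rho>i \<rho>1 \<rho>g \<rho>s2 weakH in \<open>auto simp: Om_def\<close>)
  interpret T: TS2 G u0 g0 \<rho> "1 / I" by (rule TS)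
  have vu: "AE p in lborel. p \<in> Om \<longrightarrow> T.v p = u p"
    using T.C3 u0ae by eventually_elim (auto simp: Om_def indicator_def)
  have char: "AE x in lborel. x \<in> G \<longrightarrow> t x = T.c x" if tr: "is_trace G u t" for t
  proof -
    obtain v' where a1: "AE p in lebesgue. p \<in> Omega2 G \<longrightarrow> v' p = u p"
      and a2: "AE x in lebesgue. x \<in> G \<longrightarrow> continuous_on {0..<1} (\<lambda>z. v' (x, z)) \<and> t x = v' (x, 0)"
      using tr unfolding is_trace_def by blast
    have a1': "AE p in lborel. p \<in> Om \<longrightarrow> v' p = u p" using a1 by (simp add: AE_completion_iff OmO)
    have a2': "AE x in lborel. x \<in> G \<longrightarrow> continuous_on {0..<1} (\<lambda>z. v' (x, z)) \<and> t x = v' (x, 0)"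
      using a2 by (simp add: AE_completion_iff)
    have e: "AE p in lborel. p \<in> Om \<longrightarrow> v' p = T.v p" using a1' vu by eventually_elim auto
    have "AE p in (lborel::'a measure) \<Otimes>\<^sub>M (lborel::real measure). p \<in> Om \<longrightarrow> v' p = T.v p"
      unfolding lborel_prod by (rule e)
    from lborel_pair.AE_pair[OF this]
    have e': "AE x in lborel. AE z in lborel. (x, z) \<in> Om \<longrightarrow> v' (x, z) = T.v (x, z)" by simp
    show ?thesis using e' a2' T.AE_good
    proof eventually_elim
      case (elim x)
      show ?case
      proof
        assume xG: "x \<in> G"
        have c1: "continuous_on {0..<1} (\<lambda>z. v' (x, z))" and tx: "t x = v' (x, 0)" using elim(2) xG by auto
        have c2: "continuous_on {0..<1} (\<lambda>z. T.v (x, z))" by (rule T.v_line_cont[OF elim(3)])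
        have ae: "AE z in lborel. z \<in> {0<..<1} \<longrightarrow> v' (x, z) = T.v (x, z)"
          using elim(1) by eventually_elim (use xG in \<open>auto simp: Om_def\<close>)
        have "v' (x, 0) = T.v (x, 0)" by (rule cont_ae_eq0[OF c1 c2 ae])
        then show "t x = T.c x" using tx T.v_at0 by simp
      qed
    qed
  qed
  have tr0: "is_trace G u T.c" unfolding is_trace_def
  proof (intro exI[of _ T.v] conjI)
    show "AE p in lebesgue. p \<in> Omega2 G \<longrightarrow> T.v p = u p" using vu by (simp add: AE_completion_iff OmO)
    have "AE x in lborel. x \<in> G \<longrightarrow> continuous_on {0..<1} (\<lambda>z. T.v (x, z)) \<and> T.c x = T.v (x, 0)"
      using T.AE_good by eventually_elim (simp add: T.v_line_cont T.v_at0)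
    then show "AE x in lebesgue. x \<in> G \<longrightarrow> continuous_on {0..<1} (\<lambda>z. T.v (x, z)) \<and> T.c x = T.v (x, 0)"
      by (simp add: AE_completion_iff)
  qed
  have uniq: "AE x in lebesgue. x \<in> G \<longrightarrow> t1 x = t2 x" if "is_trace G u t1" "is_trace G u t2" for t1 t2
  proof -
    have "AE x in lborel. x \<in> G \<longrightarrow> t1 x = t2 x"
      using char[OF that(1)] char[OF that(2)] by eventually_elim auto
    then show ?thesis by (simp add: AE_completion_iff)
  qed
  have norms: "in_L2 G t \<and> L2_norm G t \<le> sqrt 2 * (L2_norm (Omega2 G) u + L2_norm (Omega2 G) g)
          \<and> L2_norm (Omega2 G) u \<le> sqrt 2 * (L2_norm (Omega2 G) g + L2_norm G t)" if tr: "is_trace G u t" for t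
  proof -
    have ch: "AE x in lborel. x \<in> G \<longrightarrow> t x = T.c x" by (rule char[OF tr])
    have cm[measurable]: "T.c \<in> borel_measurable borel" by (rule T.c_meas)
    have Gb[measurable]: "G \<in> sets borel" using Gopen by simp
    have m1: "(\<lambda>x. indicator G x * T.c x) \<in> borel_measurable lebesgue"
      by (rule measurable_completion) measurable
    have "AE x in lborel. indicator G x * T.c x = indicator G x * t x"
      using ch by eventually_elim (auto simp: indicator_def)
    then have ae1: "AE x in lebesgue. indicator G x * T.c x = indicator G x * t x"
      by (rule AE_completion)
    have tm: "(\<lambda>x. indicator G x * t x) \<in> borel_measurable lebesgue"
      by (rule borel_measurable_AE[OF m1 ae1])
    have hm: "(\<lambda>x. indicator G x * (t x)\<^sup>2) \<in> borel_measurable lebesgue"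
    proof -
      have "(\<lambda>x. indicator G x * (t x)\<^sup>2) = (\<lambda>x. (indicator G x * t x)\<^sup>2)"
        by (auto simp: fun_eq_iff indicator_def)
      then show ?thesis using tm by simp
    qed
    have h0m: "(\<lambda>x. (T.c x)\<^sup>2) \<in> borel_measurable borel" by measurable
    have ae2: "AE x in lborel. indicator G x * (t x)\<^sup>2 = (T.c x)\<^sup>2"
      using ch by eventually_elim (auto simp: indicator_def T.c_out)
    have sI: "set_integrable lebesgue G (\<lambda>x. (t x)\<^sup>2)"
      using conv_L(1)[OF hm h0m ae2] T.c2_int by simp
    have Lt: "L2_norm G t = sqrt (\<integral>x. (T.c x)\<^sup>2 \<partial>lborel)"
      unfolding L2_norm_def using conv_L(2)[OF hm h0m ae2] by simp
    have inL2: "in_L2 G t" unfolding in_L2_def using tm sI by simp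
    have X0: "0 \<le> (\<integral>p. (u0 p)\<^sup>2 \<partial>lborel)" and Y0: "0 \<le> (\<integral>p. (g0 p)\<^sup>2 \<partial>lborel)"
      and Z0: "0 \<le> (\<integral>x. (T.c x)\<^sup>2 \<partial>lborel)" by simp_all
    have i1: "L2_norm G t \<le> sqrt 2 * (L2_norm (Omega2 G) u + L2_norm (Omega2 G) g)"
      unfolding Lt OmO Lu Lg by (rule sqrt_ineq[OF T.E4a X0 Y0])
    have i2: "L2_norm (Omega2 G) u \<le> sqrt 2 * (L2_norm (Omega2 G) g + L2_norm G t)"
    proof -
      have "(\<integral>p. (u0 p)\<^sup>2 \<partial>lborel) \<le> 2 * ((\<integral>p. (g0 p)\<^sup>2 \<partial>lborel) + (\<integral>x. (T.c x)\<^sup>2 \<partial>lborel))"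
        using T.E4b by simp
      then show ?thesis unfolding Lt OmO Lu Lg by (rule sqrt_ineq[OF _ Y0 Z0])
    qed
    show ?thesis using inL2 i1 i2 by simp
  qed
  show ?thesis using tr0 uniq norms by blast
qed


end
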